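(* Let $\alpha\in(0,1]$, $d,p\in\mathbb N$ and $f\in C^{3,\alpha}([0,1]^d,\mathbb R^p)$. Then there exists a sequence of deep neural networks $h_n\in C^{2,1}([0,1]^d,\mathbb R^p)$, $n\in\mathbb N$, with ReCU activation such that $\|f-h_n\|_{C^{2,1}([0,1]^d,\mathbb R^p)}\to0$ as $n\to\infty$.
   Context: For $k\in\mathbb N_0$, $C^k([0,1]^d,\mathbb R^m)$ is the set of $f\colon[0,1]^d\to\mathbb R^m$ that are $C^k$ on $(0,1)^d$ with all partial derivatives $\nabla^\gamma f_i$, $|\gamma|\le k$, uniformly continuous on $(0,1)^d$ (hence continuously extended to $[0,1]^d$), with norm $\|f\|_{C^k}=\max_{|\gamma|\le k}\max_i\sup_{x\in[0,1]^d}|\nabla^\gamma f_i(x)|$. For $\alpha\in(0,1]$, $C^{k,\alpha}([0,1]^d,\mathbb R^m)$ consists of $f\in C^k$ with $\|f\|_{C^{k,\alpha}}=\|f\|_{C^k}+\max_{|\gamma|=k}\max_i\sup_{x\ne y\in(0,1)^d}\frac{|\nabla^\gamma f_i(x)-\nabla^\gamma f_i(y)|}{\|x-y\|^\alpha}<\infty$. A neural network with architecture $(l_0,\dots,l_L)\in\mathbb N^{L+1}$ and activation $\sigma$ is a tuple $((W_1,B_1),\dots,(W_L,B_L))$, $W_k\in\mathbb R^{l_k\times l_{k-1}}$, $B_k\in\mathbb R^{l_k}$, realizing $x_0\mapsto W_Lx_{L-1}+B_L$ where $x_k=\sigma(W_kx_{k-1}+B_k)$ for $k=1,\dots,L-1$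 and $\sigma$ acts componentwise. ReCU activation is $\sigma(x)=(\max\{x,0\})^3$; ReLU activation is $\sigma(x)=\max\{x,0\}$. Networks are identified with their realizations restricted to $[0,1]^d$. *)

theory Defs
  imports "HOL-Analysis.Analysis"
begin

text \<open>Points of [0,1]^d are represented as functions nat => real whose
coordinates with index >= d vanish; values in R^p as nat => real read at indices < p.\<close>

definition open_cube :: "nat \<Rightarrow> (nat \<Rightarrow> real) set" where
  "open_cube d = {x. (\<forall>i<d. 0 < x i \<and> x i < 1) \<and> (\<forall>i\<ge>d. x i = 0)}"

definition edist :: "nat \<Rightarrow> (nat \<Rightarrow> real) \<Rightarrow> (nat \<Rightarrow> real) \<Rightarrow> real" where
  "edist d x y = sqrt (\<Sum>i<d. (x i - y i)^2)"

definition pdiff :: "nat \<Rightarrow> ((nat \<Rightarrow> real) \<Rightarrow> real) \<Rightarrow> (nat \<Rightarrow> real) \<Rightarrow> real" where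
  "pdiff i g x = (THE D. ((\<lambda>t. g (x(i := x i + t))) has_real_derivative D) (at 0))"

text \<open>Iterated partial derivative; the list gives the directions (last element applied first).\<close>
fun nabla :: "nat list \<Rightarrow> ((nat \<Rightarrow> real) \<Rightarrow> real) \<Rightarrow> (nat \<Rightarrow> real) \<Rightarrow> real" where
  "nabla [] g = g"
| "nabla (i # is) g = pdiff i (nabla is g)"

definition ucont_on :: "nat \<Rightarrow> (nat \<Rightarrow> real) set \<Rightarrow> ((nat \<Rightarrow> real) \<Rightarrow> real) \<Rightarrow> bool" where
  "ucont_on d U g \<longleftrightarrow> (\<forall>e>0. \<exists>\<delta>>0. \<forall>x\<in>U. \<forall>y\<in>U. edist d x y < \<delta> \<longrightarrow> \<bar>g x - g y\<bar> < e)"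

definition is_Ck :: "nat \<Rightarrow> nat \<Rightarrow> nat \<Rightarrow> ((nat \<Rightarrow> real) \<Rightarrow> (nat \<Rightarrow> real)) \<Rightarrow> bool" where
  "is_Ck d p k f \<longleftrightarrow>
     (\<forall>c<p. \<forall>is. set is \<subseteq> {..<d} \<and> length is \<le> k \<longrightarrow>
        ucont_on d (open_cube d) (nabla is (\<lambda>x. f x c)) \<and>
        (length is < k \<longrightarrow> (\<forall>i<d. \<forall>x\<in>open_cube d.
           ((\<lambda>t. nabla is (\<lambda>x. f x c) (x(i := x i + t))) has_real_derivative
              nabla (i # is) (\<lambda>x. f x c) x) (at 0))))"

text \<open>C^k norm: sup over components, derivatives of order <= k and points
(sup over the open cube equals the sup of the continuous extension over [0,1]^d).\<close>
definition Ck_norm :: "nat \<Rightarrow> nat \<Rightarrow> nat \<Rightarrow> ((nat \<Rightarrow> real) \<Rightarrow> (nat \<Rightarrow> real)) \<Rightarrow> real" where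
  "Ck_norm d p k f = Sup {\<bar>nabla is (\<lambda>x. f x c) x\<bar> | c is x.
      c < p \<and> set is \<subseteq> {..<d} \<and> length is \<le> k \<and> x \<in> open_cube d}"

definition holder_quots :: "nat \<Rightarrow> nat \<Rightarrow> nat \<Rightarrow> real \<Rightarrow> ((nat \<Rightarrow> real) \<Rightarrow> (nat \<Rightarrow> real)) \<Rightarrow> real set" where
  "holder_quots d p k \<alpha> f = {\<bar>nabla is (\<lambda>x. f x c) x - nabla is (\<lambda>x. f x c) y\<bar> / (edist d x y) powr \<alpha> | c is x y.
      c < p \<and> set is \<subseteq> {..<d} \<and> length is = k \<and> x \<in> open_cube d \<and> y \<in> open_cube d \<and> x \<noteq> y}"

definition is_Ck_alpha :: "nat \<Rightarrow> nat \<Rightarrow> nat \<Rightarrow> real \<Rightarrow> ((nat \<Rightarrow> real) \<Rightarrow> (nat \<Rightarrow> real)) \<Rightarrow> bool" where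
  "is_Ck_alpha d p k \<alpha> f \<longleftrightarrow> is_Ck d p k f \<and> bdd_above (holder_quots d p k \<alpha> f)"

definition Ck_alpha_norm :: "nat \<Rightarrow> nat \<Rightarrow> nat \<Rightarrow> real \<Rightarrow> ((nat \<Rightarrow> real) \<Rightarrow> (nat \<Rightarrow> real)) \<Rightarrow> real" where
  "Ck_alpha_norm d p k \<alpha> f = Ck_norm d p k f + Sup (holder_quots d p k \<alpha> f)"

text \<open>Neural networks: architecture (l_0,...,l_L) as a list, layers (W_k,B_k) as a list,
matrices/vectors as functions on indices (only entries with row < l_k, column < l_{k-1} matter).\<close>
type_synonym layer = "(nat \<Rightarrow> nat \<Rightarrow> real) \<times> (nat \<Rightarrow> real)"

definition affine_map :: "nat \<Rightarrow> (nat \<Rightarrow> nat \<Rightarrow> real) \<Rightarrow> (nat \<Rightarrow> real) \<Rightarrow> (nat \<Rightarrow> real) \<Rightarrow> (nat \<Rightarrow> real)" where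
  "affine_map n W B x = (\<lambda>i. (\<Sum>j<n. W i j * x j) + B i)"

fun nn_eval :: "(real \<Rightarrow> real) \<Rightarrow> nat list \<Rightarrow> layer list \<Rightarrow> (nat \<Rightarrow> real) \<Rightarrow> (nat \<Rightarrow> real)" where
  "nn_eval \<sigma> (n # ns) [(W, B)] x = affine_map n W B x"
| "nn_eval \<sigma> (n # ns) ((W, B) # l # ls) x = nn_eval \<sigma> ns (l # ls) (\<lambda>i. \<sigma> (affine_map n W B x i))"
| "nn_eval \<sigma> _ _ x = (\<lambda>_. 0)"

definition nn_arch_ok :: "nat \<Rightarrow> nat \<Rightarrow> nat list \<Rightarrow> layer list \<Rightarrow> bool" where
  "nn_arch_ok d p arch Ls \<longleftrightarrow> Ls \<noteq> [] \<and> length arch = length Ls + 1 \<and>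
     (\<forall>l\<in>set arch. l > 0) \<and> hd arch = d \<and> last arch = p"

definition recu :: "real \<Rightarrow> real" where
  "recu x = (max x 0) ^ 3"

end

theory Submission
  imports Defs
begin

lemma recu_odd: "recu a - recu (-a) = a^3"
  by (simp add: recu_def max_def)

lemma id6: "(\<Sum>t<6. [1/6,-1/6,1/6,-1/6,-1/3,1/3::real] ! t * recu ([1,-1,1,-1,1,-1::real] ! t * s + [1,-1,-1,1,0,0::real] ! t)) = s"
proof -
  have "(\<Sum>t<6. [1/6,-1/6,1/6,-1/6,-1/3,1/3::real] ! t * recu ([1,-1,1,-1,1,-1::real] ! t * s + [1,-1,-1,1,0,0::real] ! t))
    = ((recu (s+1) - recu (-(s+1))) + (recu (s - 1) - recu (-(s - 1))) - 2 * (recu s - recu (-s)))/6"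
    by (simp add: numeral_eq_Suc lessThan_Suc algebra_simps)
  also have "\<dots> = s" unfolding recu_odd by (simp add: algebra_simps power3_eq_cube)
  finally show ?thesis .
qed

lemma mult8: "(\<Sum>h<8. [1,-1,-1,1,-1,1,1,-1::real] ! h / 24 * recu ([1,-1,1,-1,1,-1,1,-1::real] ! h * u + [1,-1,1,-1,-1,1,-1,1::real] ! h * v + [1,-1,-1,1,1,-1,-1,1::real] ! h)) = u * v"
proof -
  have "(\<Sum>h<8. [1,-1,-1,1,-1,1,1,-1::real] ! h / 24 * recu ([1,-1,1,-1,1,-1,1,-1::real] ! h * u + [1,-1,1,-1,-1,1,-1,1::real] ! h * v + [1,-1,-1,1,1,-1,-1,1::real] ! h))
    = ((recu (u+v+1) - recu (-(u+v+1))) - (recu (u+v-1) - recu (-(u+v-1)))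
       - (recu (u-v+1) - recu (-(u-v+1))) + (recu (u-v-1) - recu (-(u-v-1))))/24"
    by (simp add: numeral_eq_Suc lessThan_Suc algebra_simps)
  also have "\<dots> = u * v" unfolding recu_odd by (simp add: algebra_simps power3_eq_cube)
  finally show ?thesis .
qed


lemma sum_lessThan_add_split:
  "(\<Sum>j<m+n. g j) = (\<Sum>j<m. g j) + (\<Sum>j<n. g (m + j))" for g :: "nat \<Rightarrow> real"
  by (induct n) (simp_all add: add.assoc)

lemma nn_eval_single: "nn_eval \<sigma> (n#ns) [L] x = affine_map n (fst L) (snd L) x"
  by (cases L) simp

lemma nn_eval_cons: "Ls \<noteq> [] \<Longrightarrow>
  nn_eval \<sigma> (n#ns) (L#Ls) x = nn_eval \<sigma> ns Ls (\<lambda>i. \<sigma> (affine_map n (fst L) (snd L) x i))"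
  by (cases L; cases Ls) auto

lemma nn_eval_local:
  assumes "\<forall>j<hd arch. x j = y j"
  shows "nn_eval \<sigma> arch Ls x = nn_eval \<sigma> arch Ls y"
proof -
  have aff: "affine_map n W B x = affine_map n W B y" if "\<forall>j<n. x j = y j" for n W B
    using that unfolding affine_map_def by (auto intro!: ext sum.cong)
  show ?thesis
  proof (cases arch)
    case Nil then show ?thesis by (cases Ls) auto
  next
    case (Cons n ns)
    show ?thesis
    proof (cases Ls)
      case Nil then show ?thesis using Cons by simp
    next
      case (Cons L Ls')
      then show ?thesis using \<open>arch = n#ns\<close> assms aff
        by (cases Ls') (auto simp: nn_eval_single nn_eval_cons)
    qed
  qed
qed

definition mergeL :: "layer \<Rightarrow> layer \<Rightarrow> nat \<Rightarrow> layer" where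
  "mergeL L1 L2 q = ((\<lambda>i l. \<Sum>j<q. fst L2 i j * fst L1 j l), (\<lambda>i. (\<Sum>j<q. fst L2 i j * snd L1 j) + snd L2 i))"

lemma affine_comp:
  "affine_map q (fst L2) (snd L2) (affine_map d (fst L1) (snd L1) x)
   = affine_map d (fst (mergeL L1 L2 q)) (snd (mergeL L1 L2 q)) x"
  unfolding affine_map_def mergeL_def
  by (auto intro!: ext simp: algebra_simps sum_distrib_left sum_distrib_right sum.distrib
      intro: sum.swap)

lemma nn_eval_comp:
  assumes "Ls1 \<noteq> []" "length arch1 = length Ls1 + 1" "Ls2 \<noteq> []" "length arch2 = length Ls2 + 1"
    "hd arch2 = last arch1"
  shows "nn_eval \<sigma> (butlast arch1 @ tl arch2) (butlast Ls1 @ mergeL (last Ls1) (hd Ls2) (last arch1) # tl Ls2) x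
    = nn_eval \<sigma> arch2 Ls2 (nn_eval \<sigma> arch1 Ls1 x)"
  using assms
proof (induct Ls1 arbitrary: arch1 x)
  case Nil then show ?case by simp
next
  case (Cons L1 Ls1')
  obtain a as1 where a1: "arch1 = a # as1" using Cons.prems by (cases arch1) auto
  obtain L2 Ls2' where l2: "Ls2 = L2 # Ls2'" using Cons.prems by (cases Ls2) auto
  obtain q as2 where a2: "arch2 = q # as2" using Cons.prems by (cases arch2) auto
  show ?case
  proof (cases Ls1')
    case Nil
    then obtain q' where as1: "as1 = [q']" using Cons.prems a1 by (cases as1) auto
    have q: "q = q'" using Cons.prems a1 a2 as1 by simp
    show ?thesis
    proof (cases Ls2')
      case Nil
      then show ?thesis using a1 a2 as1 l2 q \<open>Ls1' = []\<close>
        by (simp add: nn_eval_single affine_comp)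
    next
      case (Cons L' rs)
      then show ?thesis using a1 a2 as1 l2 q \<open>Ls1' = []\<close>
        by (simp add: nn_eval_single nn_eval_cons affine_comp)
    qed
  next
    case (Cons L1' rs)
    have ne: "butlast Ls1' @ mergeL (last Ls1') (hd Ls2) (last as1) # tl Ls2 \<noteq> []" by simp
    have as1ne: "as1 \<noteq> []" using Cons.prems a1 \<open>Ls1' = L1' # rs\<close> by auto
    have "nn_eval \<sigma> (butlast arch1 @ tl arch2) (butlast (L1 # Ls1') @ mergeL (last (L1 # Ls1')) (hd Ls2) (last arch1) # tl Ls2) x
      = nn_eval \<sigma> (a # (butlast as1 @ tl arch2)) (L1 # (butlast Ls1' @ mergeL (last Ls1') (hd Ls2) (last as1) # tl Ls2)) x"
      using a1 as1ne \<open>Ls1' = L1' # rs\<close> by simp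
    also have "\<dots> = nn_eval \<sigma> (butlast as1 @ tl arch2) (butlast Ls1' @ mergeL (last Ls1') (hd Ls2) (last as1) # tl Ls2)
        (\<lambda>i. \<sigma> (affine_map a (fst L1) (snd L1) x i))"
      by (rule nn_eval_cons[OF ne])
    also have "\<dots> = nn_eval \<sigma> arch2 Ls2 (nn_eval \<sigma> as1 Ls1' (\<lambda>i. \<sigma> (affine_map a (fst L1) (snd L1) x i)))"
      using Cons.prems a1 as1ne \<open>Ls1' = L1' # rs\<close> by (intro Cons.hyps) auto
    also have "nn_eval \<sigma> as1 Ls1' (\<lambda>i. \<sigma> (affine_map a (fst L1) (snd L1) x i)) = nn_eval \<sigma> arch1 (L1 # Ls1') x"
      using a1 \<open>Ls1' = L1' # rs\<close> by (simp add: nn_eval_cons)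
    finally show ?thesis .
  qed
qed

definition netL :: "nat \<Rightarrow> nat \<Rightarrow> nat \<Rightarrow> ((nat \<Rightarrow> real) \<Rightarrow> (nat \<Rightarrow> real)) \<Rightarrow> bool" where
  "netL d q L g \<longleftrightarrow> (\<exists>arch Ls. nn_arch_ok d q arch Ls \<and> length Ls = L \<and>
      (\<forall>x c. c < q \<longrightarrow> nn_eval recu arch Ls x c = g x c))"

lemma netL_cong: "netL d q L g \<Longrightarrow> (\<And>x c. c < q \<Longrightarrow> g x c = g' x c) \<Longrightarrow> netL d q L g'"
  unfolding netL_def by metis

lemma netL_local:
  assumes "netL q r L g" "\<forall>j<q. x j = y j" "c < r"
  shows "g x c = g y c"
proof -
  obtain arch Ls where ok: "nn_arch_ok q r arch Ls" and ev: "\<forall>x c. c < r \<longrightarrow> nn_eval recu arch Ls x c = g x c"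
    using assms(1) unfolding netL_def by blast
  have "hd arch = q" using ok unfolding nn_arch_ok_def by simp
  then have "nn_eval recu arch Ls x = nn_eval recu arch Ls y" using assms(2) nn_eval_local by metis
  then show ?thesis using ev assms(3) by metis
qed

lemma netL_comp:
  assumes "netL d q L1 g1" "netL q r L2 g2"
  shows "netL d r (L1 + L2 - 1) (\<lambda>x. g2 (g1 x))"
proof -
  obtain arch1 Ls1 where ok1: "nn_arch_ok d q arch1 Ls1" and len1: "length Ls1 = L1"
    and ev1: "\<forall>x c. c < q \<longrightarrow> nn_eval recu arch1 Ls1 x c = g1 x c"
    using assms(1) unfolding netL_def by blast
  obtain arch2 Ls2 where ok2: "nn_arch_ok q r arch2 Ls2" and len2: "length Ls2 = L2"
    and ev2: "\<forall>x c. c < r \<longrightarrow> nn_eval recu arch2 Ls2 x c = g2 x c"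
    using assms(2) unfolding netL_def by blast
  define arch where "arch = butlast arch1 @ tl arch2"
  define Ls where "Ls = butlast Ls1 @ mergeL (last Ls1) (hd Ls2) (last arch1) # tl Ls2"
  have l1: "Ls1 \<noteq> []" "length arch1 = length Ls1 + 1" "hd arch1 = d" "last arch1 = q" "\<forall>l\<in>set arch1. l > 0"
    using ok1 unfolding nn_arch_ok_def by auto
  have l2: "Ls2 \<noteq> []" "length arch2 = length Ls2 + 1" "hd arch2 = q" "last arch2 = r" "\<forall>l\<in>set arch2. l > 0"
    using ok2 unfolding nn_arch_ok_def by auto
  have ok: "nn_arch_ok d r arch Ls"
  proof -
    have "length arch1 \<ge> 2" "length arch2 \<ge> 2" using l1 l2 by (auto simp: Suc_le_eq)
    then obtain a b as1 where A1: "arch1 = a # b # as1" by (cases arch1; cases "tl arch1") auto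
    obtain a' b' as2 where A2: "arch2 = a' # b' # as2" using \<open>length arch2 \<ge> 2\<close> by (cases arch2; cases "tl arch2") auto
    have "set arch \<subseteq> set arch1 \<union> set arch2" unfolding arch_def
      by (auto dest: in_set_butlastD list.set_sel(2)[rotated])
      (metis A2 list.sel(3) list.set_intros(2))
    moreover have "hd arch = d" using A1 l1 unfolding arch_def by (cases as1) auto
    moreover have "last arch = r" using A2 l2 unfolding arch_def by simp
    moreover have "length arch = length Ls + 1" using l1 l2 unfolding arch_def Ls_def by simp
    ultimately show ?thesis using l1 l2 unfolding nn_arch_ok_def Ls_def by auto
  qed
  moreover have "length Ls = L1 + L2 - 1"
  proof -
    have "L1 \<ge> 1" "L2 \<ge> 1" using l1 l2 len1 len2 by (auto simp: Suc_le_eq)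
    then show ?thesis using l1 l2 len1 len2 unfolding Ls_def by simp
  qed
  moreover have "nn_eval recu arch Ls x c = g2 (g1 x) c" if "c < r" for x c
  proof -
    have "nn_eval recu arch Ls x c = nn_eval recu arch2 Ls2 (nn_eval recu arch1 Ls1 x) c"
      unfolding arch_def Ls_def using l1 l2 by (subst nn_eval_comp) auto
    also have "\<dots> = g2 (nn_eval recu arch1 Ls1 x) c" using ev2 that by simp
    also have "\<dots> = g2 (g1 x) c" using netL_local[OF assms(2) _ that] ev1 by auto
    finally show ?thesis .
  qed
  ultimately show ?thesis unfolding netL_def by blast
qed


lemma sum_shift_ivl: "(\<Sum>h\<in>{a..<a+k}. g h) = (\<Sum>t<k. g (a + t))" for g :: "nat \<Rightarrow> real"
  by (induct k) (simp_all add: atLeastLessThanSuc add.commute)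

lemma sum_group6: "(\<Sum>h<q*6. g h) = (\<Sum>m<q. \<Sum>t<6. g (m*6 + t))" for g :: "nat \<Rightarrow> real"
  using sum.nat_group[of g 6 q] by (simp add: sum_shift_ivl)

definition idL1 :: layer where
  "idL1 = ((\<lambda>h j. if j = h div 6 then [1,-1,1,-1,1,-1] ! (h mod 6) else 0), (\<lambda>h. [1,-1,-1,1,0,0] ! (h mod 6)))"
definition idL2 :: layer where
  "idL2 = ((\<lambda>i h. if h div 6 = i then [1/6,-1/6,1/6,-1/6,-1/3,1/3] ! (h mod 6) else 0), (\<lambda>_. 0))"

lemma sum_if_eq: "(\<Sum>j<(q::nat). (if j = k then a else 0) * (x j::real)) = (if k < q then a * x k else 0)"
  by (cases "k < q") (simp_all add: if_distrib[of "\<lambda>u. u * _"] sum.delta sum.delta' cong: if_cong)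

lemma netL_id:
  assumes "q > 0" shows "netL q q 2 (\<lambda>x. x)"
proof -
  have ok: "nn_arch_ok q q [q, q*6, q] [idL1, idL2]" using assms unfolding nn_arch_ok_def by auto
  have "nn_eval recu [q, q*6, q] [idL1, idL2] x c = x c" if "c < q" for x c
  proof -
    have inner: "affine_map q (fst idL1) (snd idL1) x (m*6+t) = [1,-1,1,-1,1,-1] ! t * x m + [1,-1,-1,1,0,0] ! t"
      if "m < q" "t < 6" for m t
      using that unfolding affine_map_def idL1_def by (simp add: sum_if_eq)
    have "nn_eval recu [q, q*6, q] [idL1, idL2] x c
      = (\<Sum>h<q*6. fst idL2 c h * recu (affine_map q (fst idL1) (snd idL1) x h))"
      by (simp add: nn_eval_cons nn_eval_single affine_map_def idL2_def)
    also have "\<dots> = (\<Sum>m<q. \<Sum>t<6. fst idL2 c (m*6+t) * recu (affine_map q (fst idL1) (snd idL1) x (m*6+t)))"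
      by (rule sum_group6)
    also have "\<dots> = (\<Sum>m<q. if m = c then (\<Sum>t<6. [1/6,-1/6,1/6,-1/6,-1/3,1/3::real] ! t * recu ([1,-1,1,-1,1,-1::real] ! t * x m + [1,-1,-1,1,0,0::real] ! t)) else 0)"
      by (intro sum.cong refl) (auto simp: inner idL2_def intro!: sum.cong)
    also have "\<dots> = x c" using that id6[of "x c"] by simp
    finally show ?thesis .
  qed
  then show ?thesis using ok unfolding netL_def by (intro exI[of _ "[q, q*6, q]"] exI[of _ "[idL1, idL2]"]) auto
qed

lemma netL_pos: "netL d q L g \<Longrightarrow> q > 0 \<and> L \<ge> 1 \<and> d > 0"
proof -
  assume "netL d q L g"
  then obtain arch Ls where ok: "nn_arch_ok d q arch Ls" "length Ls = L" unfolding netL_def by blast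
  then have ne: "arch \<noteq> []" "Ls \<noteq> []" unfolding nn_arch_ok_def by auto
  have "hd arch \<in> set arch" "last arch \<in> set arch" using ne by auto
  then show ?thesis using ok ne unfolding nn_arch_ok_def by (auto simp: Suc_le_eq)
qed

lemma netL_pad: "netL d q L g \<Longrightarrow> netL d q (Suc L) g"
  using netL_comp[of d q L g q 2 "\<lambda>x. x"] netL_id[of q] netL_pos[of d q L g] by simp

lemma netL_mono: "netL d q L g \<Longrightarrow> L \<le> L' \<Longrightarrow> netL d q L' g"
proof (induct L' rule: nat_induct)
  case 0 then show ?case by simp
next
  case (Suc n) then show ?case by (cases "L = Suc n") (auto intro: netL_pad)
qed

definition mult8L1 :: layer where
  "mult8L1 = ((\<lambda>h j. if j = 0 then [1,-1,1,-1,1,-1,1,-1] ! h else [1,-1,1,-1,-1,1,-1,1] ! h), (\<lambda>h. [1,-1,-1,1,1,-1,-1,1] ! h))"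
definition mult8L2 :: layer where
  "mult8L2 = ((\<lambda>i h. [1,-1,-1,1,-1,1,1,-1] ! h / 24), (\<lambda>_. 0))"

lemma netL_mult: "netL 2 1 2 (\<lambda>z c. z 0 * z 1)"
proof -
  have ok: "nn_arch_ok 2 1 [2, 8, 1] [mult8L1, mult8L2]" unfolding nn_arch_ok_def by auto
  have "nn_eval recu [2, 8, 1] [mult8L1, mult8L2] z c = z 0 * z 1" for z c
  proof -
    have "nn_eval recu [2, 8, 1] [mult8L1, mult8L2] z c
      = (\<Sum>h<8. [1,-1,-1,1,-1,1,1,-1::real] ! h / 24 * recu ([1,-1,1,-1,1,-1,1,-1::real] ! h * z 0 + [1,-1,1,-1,-1,1,-1,1::real] ! h * z (Suc 0) + [1,-1,-1,1,1,-1,-1,1::real] ! h))"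
      by (simp add: nn_eval_cons nn_eval_single affine_map_def mult8L1_def mult8L2_def numeral_2_eq_2 lessThan_Suc;
          intro sum.cong refl; simp add: algebra_simps)
    also have "\<dots> = z 0 * z 1" using mult8[of "z 0" "z (Suc 0)"] by simp
    finally show ?thesis .
  qed
  then show ?thesis using ok unfolding netL_def by (intro exI[of _ "[2, 8, 1]"] exI[of _ "[mult8L1, mult8L2]"]) auto
qed

lemma netL_affine:
  assumes "d > 0" "q > 0"
  shows "netL d q 1 (\<lambda>x. affine_map d W B x)"
proof -
  have "nn_arch_ok d q [d, q] [(W, B)]" using assms unfolding nn_arch_ok_def by auto
  then show ?thesis unfolding netL_def by (intro exI[of _ "[d, q]"] exI[of _ "[(W,B)]"]) auto
qed

definition join :: "nat \<Rightarrow> (nat \<Rightarrow> real) \<Rightarrow> (nat \<Rightarrow> real) \<Rightarrow> (nat \<Rightarrow> real)" where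
  "join w z1 z2 = (\<lambda>i. if i < w then z1 i else z2 (i - w))"

definition blockL :: "nat \<Rightarrow> nat \<Rightarrow> layer \<Rightarrow> layer \<Rightarrow> layer" where
  "blockL v1 w1 L1 L2 = ((\<lambda>i j. if i < v1 then (if j < w1 then fst L1 i j else 0)
                                   else (if j < w1 then 0 else fst L2 (i - v1) (j - w1))),
                        join v1 (snd L1) (snd L2))"

lemma affine_block:
  "affine_map (w1 + w2) (fst (blockL v1 w1 L1 L2)) (snd (blockL v1 w1 L1 L2)) (join w1 z1 z2)
   = join v1 (affine_map w1 (fst L1) (snd L1) z1) (affine_map w2 (fst L2) (snd L2) z2)"
  unfolding affine_map_def blockL_def join_def
  by (rule ext) (simp add: sum_lessThan_add_split)

definition sharedL :: "nat \<Rightarrow> layer \<Rightarrow> layer \<Rightarrow> layer" where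
  "sharedL v1 L1 L2 = ((\<lambda>i j. if i < v1 then fst L1 i j else fst L2 (i - v1) j), join v1 (snd L1) (snd L2))"

lemma affine_shared:
  "affine_map d (fst (sharedL v1 L1 L2)) (snd (sharedL v1 L1 L2)) x
   = join v1 (affine_map d (fst L1) (snd L1) x) (affine_map d (fst L2) (snd L2) x)"
  unfolding affine_map_def sharedL_def join_def by (rule ext) simp

fun blocks :: "nat list \<Rightarrow> nat list \<Rightarrow> layer list \<Rightarrow> layer list \<Rightarrow> layer list" where
  "blocks (w1 # v1 # a1) (w2 # v2 # a2) (L1 # Ls1) (L2 # Ls2) = blockL v1 w1 L1 L2 # blocks (v1 # a1) (v2 # a2) Ls1 Ls2"
| "blocks _ _ _ _ = []"

lemma join_sigma: "(\<lambda>i. \<sigma> (join v z1 z2 i)) = join v (\<lambda>i. \<sigma> (z1 i)) (\<lambda>i. \<sigma> (z2 i))"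
  unfolding join_def by auto

lemma last_map2_add: "length xs = length ys \<Longrightarrow> xs \<noteq> [] \<Longrightarrow> last (map2 (+) xs ys) = last xs + (last ys::nat)"
proof (induct xs arbitrary: ys)
  case Nil then show ?case by simp
next
  case (Cons x xs)
  then obtain y ys' where ys: "ys = y # ys'" by (cases ys) auto
  show ?case
  proof (cases "xs = []")
    case True then show ?thesis using Cons.prems ys by auto
  next
    case False
    then have "ys' \<noteq> []" using Cons.prems ys by auto
    then show ?thesis using Cons.hyps[of ys'] Cons.prems ys False by auto
  qed
qed

lemma nn_eval_blocks:
  assumes "Ls1 \<noteq> []" "length Ls1 = length Ls2" "length a1 = length Ls1 + 1" "length a2 = length Ls2 + 1"
  shows "nn_eval \<sigma> (map2 (+) a1 a2) (blocks a1 a2 Ls1 Ls2) (join (hd a1) z1 z2)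
    = join (last a1) (nn_eval \<sigma> a1 Ls1 z1) (nn_eval \<sigma> a2 Ls2 z2)"
  using assms
proof (induct Ls1 arbitrary: Ls2 a1 a2 z1 z2)
  case Nil then show ?case by simp
next
  case (Cons L1 Ls1')
  obtain L2 Ls2' where l2: "Ls2 = L2 # Ls2'" using Cons.prems by (cases Ls2) auto
  obtain w1 v1 r1 where A1: "a1 = w1 # v1 # r1" using Cons.prems by (cases a1; cases "tl a1") auto
  obtain w2 v2 r2 where A2: "a2 = w2 # v2 # r2" using Cons.prems l2 by (cases a2; cases "tl a2") auto
  show ?case
  proof (cases Ls1')
    case Nil
    then have "Ls2' = []" "r1 = []" "r2 = []" using Cons.prems l2 A1 A2 by auto
    then show ?thesis using Nil l2 A1 A2 by (simp add: nn_eval_single affine_block)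
  next
    case (Cons L1' rs)
    then obtain L2' rs' where "Ls2' = L2' # rs'" using Cons.prems l2 by (cases Ls2') auto
    obtain u1 r1' where "r1 = u1 # r1'" using Cons.prems A1 \<open>Ls1' = L1' # rs\<close> by (cases r1) auto
    obtain u2 r2' where "r2 = u2 # r2'" using Cons.prems A2 l2 \<open>Ls2' = L2' # rs'\<close> by (cases r2) auto
    have "nn_eval \<sigma> (map2 (+) a1 a2) (blocks a1 a2 (L1 # Ls1') Ls2) (join (hd a1) z1 z2)
      = nn_eval \<sigma> (map2 (+) (v1 # r1) (v2 # r2)) (blocks (v1 # r1) (v2 # r2) Ls1' Ls2')
          (join (hd (v1 # r1)) (\<lambda>i. \<sigma> (affine_map w1 (fst L1) (snd L1) z1 i)) (\<lambda>i. \<sigma> (affine_map w2 (fst L2) (snd L2) z2 i)))"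
      using l2 A1 A2 Cons \<open>Ls2' = L2' # rs'\<close> \<open>r1 = u1 # r1'\<close> \<open>r2 = u2 # r2'\<close>
      by (simp add: nn_eval_cons affine_block join_sigma)
    also have "\<dots> = join (last (v1 # r1)) (nn_eval \<sigma> (v1 # r1) Ls1' (\<lambda>i. \<sigma> (affine_map w1 (fst L1) (snd L1) z1 i)))
          (nn_eval \<sigma> (v2 # r2) Ls2' (\<lambda>i. \<sigma> (affine_map w2 (fst L2) (snd L2) z2 i)))"
      using Cons.prems l2 A1 A2 Cons by (intro Cons.hyps) auto
    finally show ?thesis using l2 A1 A2 Cons \<open>Ls2' = L2' # rs'\<close> by (simp add: nn_eval_cons)
  qed
qed

lemma netL_stack:
  assumes "netL d q1 L g1" "netL d q2 L g2"
  shows "netL d (q1 + q2) L (\<lambda>x. join q1 (g1 x) (g2 x))"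
proof -
  obtain arch1 Ls1 where ok1: "nn_arch_ok d q1 arch1 Ls1" and len1: "length Ls1 = L"
    and ev1: "\<forall>x c. c < q1 \<longrightarrow> nn_eval recu arch1 Ls1 x c = g1 x c"
    using assms(1) unfolding netL_def by blast
  obtain arch2 Ls2 where ok2: "nn_arch_ok d q2 arch2 Ls2" and len2: "length Ls2 = L"
    and ev2: "\<forall>x c. c < q2 \<longrightarrow> nn_eval recu arch2 Ls2 x c = g2 x c"
    using assms(2) unfolding netL_def by blast
  obtain L1 Ls1' where LL1: "Ls1 = L1 # Ls1'" using ok1 unfolding nn_arch_ok_def by (cases Ls1) auto
  obtain L2 Ls2' where LL2: "Ls2 = L2 # Ls2'" using ok2 unfolding nn_arch_ok_def by (cases Ls2) auto
  obtain t1 where A1: "arch1 = d # t1" using ok1 unfolding nn_arch_ok_def by (cases arch1) auto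
  obtain t2 where A2: "arch2 = d # t2" using ok2 unfolding nn_arch_ok_def by (cases arch2) auto
  have lt1: "length t1 = L" "length t2 = L" using ok1 ok2 A1 A2 len1 len2 unfolding nn_arch_ok_def by auto
  have t1ne: "t1 \<noteq> []" "t2 \<noteq> []" using lt1 len1 LL1 by auto
  have lastt: "last t1 = q1" "last t2 = q2" using ok1 ok2 A1 A2 t1ne unfolding nn_arch_ok_def by auto
  have post: "\<forall>l\<in>set t1. l > 0" "\<forall>l\<in>set t2. l > 0" using ok1 ok2 A1 A2 unfolding nn_arch_ok_def by auto
  define arch where "arch = d # map2 (+) t1 t2"
  define Ls where "Ls = sharedL (hd t1) L1 L2 # blocks t1 t2 Ls1' Ls2'"
  have lenb: "length (blocks t1 t2 Ls1' Ls2') = length Ls1'"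
  proof -
    have "\<And>a1 a2 Ls2. length a1 = length Ls1' + 1 \<Longrightarrow> length a2 = length Ls2 + 1 \<Longrightarrow> length Ls1' = length Ls2
         \<Longrightarrow> length (blocks a1 a2 Ls1' Ls2) = length Ls1'"
    proof (induct Ls1')
      case Nil then show ?case by (cases a1; cases a2) auto
    next
      case (Cons a Ls1')
      then show ?case
        by (cases a1; cases a2; cases Ls2; cases "tl a1"; cases "tl a2") auto
    qed
    then show ?thesis using lt1 len1 len2 LL1 LL2 by auto
  qed
  have ok: "nn_arch_ok d (q1 + q2) arch Ls"
  proof -
    have "set (map2 (+) t1 t2) \<subseteq> {l. l > 0}"
      using post by (auto simp: set_zip)
    moreover have "last arch = q1 + q2" using last_map2_add[of t1 t2] lt1 t1ne lastt unfolding arch_def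
      by (cases t1; cases t2) auto
    ultimately show ?thesis using lt1 lenb len1 LL1 assms netL_pos[OF assms(1)] unfolding nn_arch_ok_def arch_def Ls_def by auto
  qed
  have ev: "nn_eval recu arch Ls x = join q1 (nn_eval recu arch1 Ls1 x) (nn_eval recu arch2 Ls2 x)" for x
  proof (cases "Ls1' = []")
    case True
    then have "Ls2' = []" "t1 = [q1]" "t2 = [q2]" using len1 len2 LL1 LL2 lt1 lastt
      by (auto simp: length_Suc_conv)
    then show ?thesis using True LL1 LL2 A1 A2 unfolding arch_def Ls_def
      by (simp add: nn_eval_single affine_shared)
  next
    case False
    then have ne2: "Ls2' \<noteq> []" using len1 len2 LL1 LL2 by auto
    have bne: "blocks t1 t2 Ls1' Ls2' \<noteq> []" using lenb False by auto
    have "nn_eval recu arch Ls x = nn_eval recu (map2 (+) t1 t2) (blocks t1 t2 Ls1' Ls2')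
        (join (hd t1) (\<lambda>i. recu (affine_map d (fst L1) (snd L1) x i)) (\<lambda>i. recu (affine_map d (fst L2) (snd L2) x i)))"
      unfolding arch_def Ls_def by (simp add: nn_eval_cons[OF bne] affine_shared join_sigma)
    also have "\<dots> = join (last t1) (nn_eval recu t1 Ls1' (\<lambda>i. recu (affine_map d (fst L1) (snd L1) x i)))
        (nn_eval recu t2 Ls2' (\<lambda>i. recu (affine_map d (fst L2) (snd L2) x i)))"
      using False lt1 len1 len2 LL1 LL2 by (intro nn_eval_blocks) auto
    finally show ?thesis using A1 A2 LL1 LL2 lastt False ne2 by (simp add: nn_eval_cons)
  qed
  have evc: "\<forall>x c. c < q1 + q2 \<longrightarrow> nn_eval recu arch Ls x c = join q1 (g1 x) (g2 x) c"
    using ev1 ev2 unfolding ev join_def by auto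
  have "length Ls = L" using LL1 len1 lenb unfolding Ls_def by simp
  then show ?thesis using ok evc unfolding netL_def by blast
qed


definition net :: "nat \<Rightarrow> nat \<Rightarrow> ((nat \<Rightarrow> real) \<Rightarrow> (nat \<Rightarrow> real)) \<Rightarrow> bool" where
  "net d q g \<longleftrightarrow> (\<exists>L. netL d q L g)"

lemma net_cong: "net d q g \<Longrightarrow> (\<And>x c. c < q \<Longrightarrow> g x c = g' x c) \<Longrightarrow> net d q g'"
  unfolding net_def using netL_cong by blast

lemma net_stack:
  assumes "net d q1 g1" "net d q2 g2"
  shows "net d (q1 + q2) (\<lambda>x. join q1 (g1 x) (g2 x))"
proof -
  obtain L1 L2 where "netL d q1 L1 g1" "netL d q2 L2 g2" using assms unfolding net_def by blast
  then have "netL d q1 (max L1 L2) g1" "netL d q2 (max L1 L2) g2" by (auto intro: netL_mono)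
  then show ?thesis unfolding net_def using netL_stack by blast
qed

lemma net_comp: "net d q g1 \<Longrightarrow> net q r g2 \<Longrightarrow> net d r (\<lambda>x. g2 (g1 x))"
  unfolding net_def using netL_comp by blast

definition RS :: "nat \<Rightarrow> ((nat \<Rightarrow> real) \<Rightarrow> real) \<Rightarrow> bool" where
  "RS d g \<longleftrightarrow> net d 1 (\<lambda>x c. g x)"

lemma RS_const: "d > 0 \<Longrightarrow> RS d (\<lambda>x. a)"
  unfolding RS_def net_def
  using netL_affine[of d 1 "\<lambda>_ _. 0" "\<lambda>_. a"] by (intro exI[of _ 1]) (auto elim!: netL_cong simp: affine_map_def)

lemma RS_coord: "i < d \<Longrightarrow> RS d (\<lambda>x. x i)"
  unfolding RS_def net_def
  using netL_affine[of d 1 "\<lambda>_ j. if j = i then 1 else 0" "\<lambda>_. 0"]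
  by (intro exI[of _ 1]) (auto elim!: netL_cong simp: affine_map_def sum_if_eq)

lemma RS_binop:
  assumes "RS d g1" "RS d g2" "net 2 1 h"
  shows "net d 1 (\<lambda>x. h (join 1 (\<lambda>c. g1 x) (\<lambda>c. g2 x)))"
proof -
  have "net d (1+1) (\<lambda>x. join 1 (\<lambda>c. g1 x) (\<lambda>c. g2 x))"
    using net_stack[OF assms(1,2)[unfolded RS_def]] .
  then have "net d 2 (\<lambda>x. join 1 (\<lambda>c. g1 x) (\<lambda>c. g2 x))" by (simp add: numeral_2_eq_2)
  from net_comp[OF this assms(3)] show ?thesis .
qed

lemma RS_add: "RS d g1 \<Longrightarrow> RS d g2 \<Longrightarrow> RS d (\<lambda>x. g1 x + g2 x)"
proof -
  assume a: "RS d g1" "RS d g2"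
  have "net 2 1 (\<lambda>z. affine_map 2 (\<lambda>_ _. 1) (\<lambda>_. 0) z)"
    using netL_affine[of 2 1 "\<lambda>_ _. 1" "\<lambda>_. 0"] unfolding net_def by auto
  from RS_binop[OF a this] show ?thesis unfolding RS_def
    by (rule net_cong) (simp add: affine_map_def join_def numeral_2_eq_2 lessThan_Suc)
qed

lemma RS_mult: "RS d g1 \<Longrightarrow> RS d g2 \<Longrightarrow> RS d (\<lambda>x. g1 x * g2 x)"
proof -
  assume a: "RS d g1" "RS d g2"
  have "net 2 1 (\<lambda>z c. z 0 * z 1)" using netL_mult unfolding net_def by auto
  from RS_binop[OF a this] show ?thesis unfolding RS_def
    by (rule net_cong) (simp add: join_def)
qed

lemma RS_sum: "finite A \<Longrightarrow> d > 0 \<Longrightarrow> (\<And>a. a \<in> A \<Longrightarrow> RS d (g a)) \<Longrightarrow> RS d (\<lambda>x. \<Sum>a\<in>A. g a x)"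
  by (induct A rule: finite_induct) (auto intro: RS_const RS_add)

lemma RS_prod: "finite A \<Longrightarrow> d > 0 \<Longrightarrow> (\<And>a. a \<in> A \<Longrightarrow> RS d (g a)) \<Longrightarrow> RS d (\<lambda>x. \<Prod>a\<in>A. g a x)"
  by (induct A rule: finite_induct) (auto intro: RS_const RS_mult)

lemma RS_power: "d > 0 \<Longrightarrow> RS d g \<Longrightarrow> RS d (\<lambda>x. g x ^ n)"
  by (induct n) (auto intro: RS_const RS_mult)

lemma RS_vec:
  assumes "p \<ge> 1" "\<And>c. c < p \<Longrightarrow> RS d (G c)"
  shows "net d p (\<lambda>x c. G c x)"
  using assms
proof (induct p rule: dec_induct)
  case base
  then show ?case using assms(2)[of 0] unfolding RS_def by (auto elim!: net_cong)
next
  case (step n)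
  have "net d (n + 1) (\<lambda>x. join n (\<lambda>c. G c x) (\<lambda>c. G n x))"
    using step assms(2)[of n] unfolding RS_def by (intro net_stack) auto
  then show ?case by (auto elim!: net_cong simp: join_def less_Suc_eq)
qed


lemma bern_deriv:
  assumes "r \<le> Suc N"
  shows "(Bernstein (Suc N) r has_real_derivative
     (if r = 0 then 0 else real (Suc N) * Bernstein N (r - 1) s) - (if r = Suc N then 0 else real (Suc N) * Bernstein N r s)) (at s)"
proof -
  have d: "((\<lambda>s. real (Suc N choose r) * (s^r * (1-s)^(Suc N - r))) has_real_derivative
     real (Suc N choose r) * ((real r * s^(r-1)) * (1-s)^(Suc N - r) + s^r * (real (Suc N - r) * (1-s)^(Suc N - r - 1) * (-1)))) (at s)"
    by (intro DERIV_cmult DERIV_mult DERIV_pow derivative_eq_intros refl) (auto intro!: derivative_eq_intros)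
  have fe: "Bernstein (Suc N) r = (\<lambda>s. real (Suc N choose r) * (s^r * (1-s)^(Suc N - r)))"
    by (auto simp: Bernstein_def fun_eq_iff)
  have c1: "real r * real (Suc N choose r) = real (Suc N) * real (N choose (r - 1))" if "r > 0"
    using times_binomial_minus1_eq[OF that, of "Suc N"] by (metis diff_Suc_1 of_nat_mult)
  have c2: "real (Suc N - r) * real (Suc N choose r) = real (Suc N) * real (N choose r)"
    using binomial_absorb_comp[of "Suc N" r] by (metis diff_Suc_1 of_nat_mult)
  show ?thesis unfolding fe
  proof (rule DERIV_cong[OF d])
    consider "r = 0" | "r = Suc N" | "0 < r" "r < Suc N" using assms by linarith
    then show "real (Suc N choose r) * ((real r * s^(r-1)) * (1-s)^(Suc N - r) + s^r * (real (Suc N - r) * (1-s)^(Suc N - r - 1) * (-1)))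
      = (if r = 0 then 0 else real (Suc N) * Bernstein N (r - 1) s) - (if r = Suc N then 0 else real (Suc N) * Bernstein N r s)"
    proof cases
      case 1 then show ?thesis by (simp add: Bernstein_def)
    next
      case 2 then show ?thesis by (simp add: Bernstein_def)
    next
      case 3
      have e1: "N - (r - 1) = Suc N - r" using 3 by simp
      have e2: "N - r = Suc N - r - 1" using 3 by simp
      have "real (Suc N choose r) * ((real r * s^(r-1)) * (1-s)^(Suc N - r) + s^r * (real (Suc N - r) * (1-s)^(Suc N - r - 1) * (-1)))
        = (real r * real (Suc N choose r)) * s^(r-1) * (1-s)^(Suc N - r) - (real (Suc N - r) * real (Suc N choose r)) * s^r * (1-s)^(Suc N - r - 1)"
        by (simp add: algebra_simps)
      also have "\<dots> = real (Suc N) * Bernstein N (r - 1) s - real (Suc N) * Bernstein N r s"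
        unfolding c1[OF 3(1)] c2 Bernstein_def e1 e2 by (simp add: algebra_simps)
      finally show ?thesis using 3 by simp
    qed
  qed
qed

lemma bern_sum_deriv:
  "((\<lambda>s. \<Sum>r\<le>M. c r * Bernstein M r s) has_real_derivative
     (\<Sum>r\<le>M - 1. real M * (c (Suc r) - c r) * Bernstein (M - 1) r s)) (at s)"
proof (cases M)
  case 0
  then show ?thesis by (simp add: Bernstein_def)
next
  case (Suc N)
  have "((\<lambda>s. \<Sum>r\<le>Suc N. c r * Bernstein (Suc N) r s) has_real_derivative
     (\<Sum>r\<le>Suc N. c r * ((if r = 0 then 0 else real (Suc N) * Bernstein N (r - 1) s) - (if r = Suc N then 0 else real (Suc N) * Bernstein N r s)))) (at s)"
    by (intro DERIV_sum DERIV_cmult bern_deriv) auto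
  moreover have "(\<Sum>r\<le>Suc N. c r * ((if r = 0 then 0 else real (Suc N) * Bernstein N (r - 1) s) - (if r = Suc N then 0 else real (Suc N) * Bernstein N r s)))
     = (\<Sum>r\<le>N. real (Suc N) * (c (Suc r) - c r) * Bernstein N r s)"
  proof -
    have "(\<Sum>r\<le>Suc N. c r * ((if r = 0 then 0 else real (Suc N) * Bernstein N (r - 1) s) - (if r = Suc N then 0 else real (Suc N) * Bernstein N r s)))
      = (\<Sum>r\<le>Suc N. c r * (if r = 0 then 0 else real (Suc N) * Bernstein N (r - 1) s)) - (\<Sum>r\<le>Suc N. c r * (if r = Suc N then 0 else real (Suc N) * Bernstein N r s))"
      by (simp add: right_diff_distrib sum_subtractf)
    also have "(\<Sum>r\<le>Suc N. c r * (if r = 0 then 0 else real (Suc N) * Bernstein N (r - 1) s)) = (\<Sum>r\<le>N. c (Suc r) * (real (Suc N) * Bernstein N r s))"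
      by (subst sum.atMost_Suc_shift) simp
    also have "(\<Sum>r\<le>Suc N. c r * (if r = Suc N then 0 else real (Suc N) * Bernstein N r s)) = (\<Sum>r\<le>N. c r * (real (Suc N) * Bernstein N r s))"
      by (subst sum.atMost_Suc) (auto intro!: sum.cong)
    finally show ?thesis by (simp add: sum_subtractf algebra_simps)
  qed
  ultimately show ?thesis using Suc by simp
qed


definition Kset :: "nat \<Rightarrow> (nat \<Rightarrow> nat set) \<Rightarrow> (nat \<Rightarrow> nat) set" where
  "Kset d S = {k. (\<forall>i<d. k i \<in> S i) \<and> (\<forall>i\<ge>d. k i = 0)}"

lemma Kset_decomp:
  assumes "j < d"
  shows "Kset d S = (\<lambda>(r,k). k(j := r)) ` (S j \<times> Kset d (S(j := {0})))"
    and "inj_on (\<lambda>(r,k). k(j := r)) (S j \<times> Kset d (S(j := {0})))"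
proof -
  show "Kset d S = (\<lambda>(r,k). k(j := r)) ` (S j \<times> Kset d (S(j := {0})))"
  proof (rule set_eqI, rule iffI)
    fix k assume k: "k \<in> Kset d S"
    have "k = (\<lambda>(r,k). k(j := r)) (k j, k(j := 0))" by auto
    moreover have "(k j, k(j := 0)) \<in> S j \<times> Kset d (S(j := {0}))" using k assms unfolding Kset_def by auto
    ultimately show "k \<in> (\<lambda>(r,k). k(j := r)) ` (S j \<times> Kset d (S(j := {0})))" by blast
  next
    fix k assume "k \<in> (\<lambda>(r,k). k(j := r)) ` (S j \<times> Kset d (S(j := {0})))"
    then obtain r k0 where k: "k = k0(j := r)" "r \<in> S j" "k0 \<in> Kset d (S(j := {0}))" by auto
    have "k i \<in> S i" if "i < d" for i
    proof (cases "i = j")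
      case True then show ?thesis using k by simp
    next
      case False
      have "k0 i \<in> (S(j := {0})) i" using k(3) that unfolding Kset_def by blast
      then show ?thesis using k False by simp
    qed
    moreover have "k i = 0" if "i \<ge> d" for i
      using k that assms unfolding Kset_def by simp
    ultimately show "k \<in> Kset d S" unfolding Kset_def by blast
  qed
  show "inj_on (\<lambda>(r,k). k(j := r)) (S j \<times> Kset d (S(j := {0})))"
  proof (rule inj_onI, clarify)
    fix r k r' k'
    assume a: "k \<in> Kset d (S(j := {0}))" "k' \<in> Kset d (S(j := {0}))" "k(j := r) = k'(j := r')"
    have "r = r'" using fun_cong[OF a(3), of j] by simp
    moreover have "k = k'"
    proof
      fix i show "k i = k' i"
      proof (cases "i = j")
        case True
        have "k j \<in> (S(j := {0})) j" "k' j \<in> (S(j := {0})) j" using a(1,2) assms unfolding Kset_def by blast+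
        then show ?thesis using True by simp
      next
        case False then show ?thesis using fun_cong[OF a(3), of i] by simp
      qed
    qed
    ultimately show "r = r' \<and> k = k'" by simp
  qed
qed

lemma sum_Kset_split:
  assumes "j < d"
  shows "(\<Sum>k\<in>Kset d S. G k) = (\<Sum>r\<in>S j. \<Sum>k\<in>Kset d (S(j := {0})). G (k(j := r)))"
  by (subst Kset_decomp(1)[OF assms], subst sum.reindex[OF Kset_decomp(2)[OF assms]])
     (simp add: sum.cartesian_product case_prod_beta)

lemma Kset_Suc: "Kset (Suc d) (S(d := {0})) = Kset d S"
proof (rule set_eqI)
  fix k
  have "(\<forall>i<Suc d. k i \<in> (S(d := {0})) i) \<longleftrightarrow> (\<forall>i<d. k i \<in> S i) \<and> k d = 0"
    by (auto simp: less_Suc_eq)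
  moreover have "(\<forall>i\<ge>d. k i = 0) \<longleftrightarrow> k d = 0 \<and> (\<forall>i\<ge>Suc d. k i = 0)"
  proof
    assume "\<forall>i\<ge>d. k i = 0" then show "k d = 0 \<and> (\<forall>i\<ge>Suc d. k i = 0)" by auto
  next
    assume a: "k d = 0 \<and> (\<forall>i\<ge>Suc d. k i = 0)"
    show "\<forall>i\<ge>d. k i = 0"
    proof (intro allI impI)
      fix i assume "d \<le> i" then have "i = d \<or> Suc d \<le> i" by linarith
      then show "k i = 0" using a by auto
    qed
  qed
  ultimately show "k \<in> Kset (Suc d) (S(d := {0})) \<longleftrightarrow> k \<in> Kset d S"
    unfolding Kset_def by blast
qed

lemma Kset_0: "Kset 0 S = {\<lambda>_. 0}"
  unfolding Kset_def by auto

lemma finite_Kset: "(\<And>i. i < d \<Longrightarrow> finite (S i)) \<Longrightarrow> finite (Kset d S)"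
proof (induct d arbitrary: S)
  case 0 then show ?case by (simp add: Kset_0)
next
  case (Suc d)
  have "finite (Kset d S)" using Suc by auto
  then have "finite ((\<lambda>(r,k). k(d := r)) ` (S d \<times> Kset (Suc d) (S(d := {0}))))"
    using Suc.prems by (simp add: Kset_Suc)
  then show ?case using Kset_decomp(1)[of d "Suc d" S] by simp
qed

lemma sum_prod_Kset:
  "(\<Sum>k\<in>Kset d S. \<Prod>i<d. g i (k i)) = (\<Prod>i<d. \<Sum>r\<in>S i. g i r)" for g :: "nat \<Rightarrow> nat \<Rightarrow> real"
proof (induct d arbitrary: S)
  case 0 then show ?case by (simp add: Kset_0)
next
  case (Suc d)
  have "(\<Sum>k\<in>Kset (Suc d) S. \<Prod>i<Suc d. g i (k i))
     = (\<Sum>r\<in>S d. \<Sum>k\<in>Kset (Suc d) (S(d := {0})). \<Prod>i<Suc d. g i ((k(d := r)) i))"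
    by (rule sum_Kset_split) simp
  also have "\<dots> = (\<Sum>r\<in>S d. \<Sum>k\<in>Kset d S. g d r * (\<Prod>i<d. g i (k i)))"
    by (simp add: Kset_Suc mult.commute)
  also have "\<dots> = (\<Sum>r\<in>S d. g d r * (\<Sum>k\<in>Kset d S. \<Prod>i<d. g i (k i)))"
    by (simp add: sum_distrib_left)
  also have "\<dots> = (\<Sum>r\<in>S d. g d r * (\<Prod>i<d. \<Sum>r\<in>S i. g i r))"
    by (simp add: Suc)
  also have "\<dots> = (\<Sum>r\<in>S d. g d r) * (\<Prod>i<d. \<Sum>r\<in>S i. g i r)"
    by (simp add: sum_distrib_right)
  finally show ?case by (simp add: mult.commute)
qed

definition Qp :: "nat \<Rightarrow> (nat \<Rightarrow> nat) \<Rightarrow> ((nat \<Rightarrow> nat) \<Rightarrow> real) \<Rightarrow> (nat \<Rightarrow> real) \<Rightarrow> real" where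
  "Qp d m a x = (\<Sum>k\<in>Kset d (\<lambda>i. {..m i}). a k * (\<Prod>i<d. Bernstein (m i) (k i) (x i)))"

lemma Qp_split:
  assumes "j < d"
  shows "Qp d m a y = (\<Sum>r\<le>m j. Bernstein (m j) r (y j) *
     (\<Sum>k\<in>Kset d ((\<lambda>i. {..m i})(j := {0})). a (k(j := r)) * (\<Prod>i\<in>{..<d}-{j}. Bernstein (m i) (k i) (y i))))"
proof -
  have pr: "(\<Prod>i<d. Bernstein (m i) (if i = j then r else k i) (y i)) = Bernstein (m j) r (y j) * (\<Prod>i\<in>{..<d}-{j}. Bernstein (m i) (k i) (y i))" for k r
    using assms by (subst prod.remove[of _ j]) (auto intro!: prod.cong)
  show ?thesis unfolding Qp_def
    by (subst sum_Kset_split[OF assms]) (simp add: pr sum_distrib_left mult.assoc mult.left_commute)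
qed

definition Dop :: "nat \<Rightarrow> (nat \<Rightarrow> nat) \<times> ((nat \<Rightarrow> nat) \<Rightarrow> real) \<Rightarrow> (nat \<Rightarrow> nat) \<times> ((nat \<Rightarrow> nat) \<Rightarrow> real)" where
  "Dop j ma = ((fst ma)(j := fst ma j - 1), \<lambda>k. real (fst ma j) * (snd ma (k(j := Suc (k j))) - snd ma k))"

lemma Qp_deriv:
  assumes "j < d"
  shows "((\<lambda>t. Qp d m a (x(j := x j + t))) has_real_derivative Qp d (fst (Dop j (m, a))) (snd (Dop j (m, a))) x) (at 0)"
proof -
  define K0 where "K0 = Kset d ((\<lambda>i. {..m i})(j := {0}))"
  define R where "R r = (\<Sum>k\<in>K0. a (k(j := r)) * (\<Prod>i\<in>{..<d}-{j}. Bernstein (m i) (k i) (x i)))" for r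
  have eq: "Qp d m a (x(j := x j + t)) = (\<Sum>r\<le>m j. R r * Bernstein (m j) r (x j + t))" for t
    unfolding Qp_split[OF assms] R_def K0_def by (auto simp: mult.commute intro!: sum.cong prod.cong)
  have "((\<lambda>s. \<Sum>r\<le>m j. R r * Bernstein (m j) r s) has_real_derivative
     (\<Sum>r\<le>m j - 1. real (m j) * (R (Suc r) - R r) * Bernstein (m j - 1) r (0 + x j))) (at (0 + x j))"
    by (rule bern_sum_deriv)
  then have d: "((\<lambda>t. \<Sum>r\<le>m j. R r * Bernstein (m j) r (t + x j)) has_real_derivative
     (\<Sum>r\<le>m j - 1. real (m j) * (R (Suc r) - R r) * Bernstein (m j - 1) r (x j))) (at 0)"
    by (subst (asm) DERIV_shift) simp
  have K0': "Kset d ((\<lambda>i. {..(m(j := m j - 1)) i})(j := {0})) = K0"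
    unfolding K0_def by (intro arg_cong[where f="Kset d"]) (auto simp: fun_eq_iff)
  have "Qp d (fst (Dop j (m, a))) (snd (Dop j (m, a))) x
     = (\<Sum>r\<le>m j - 1. Bernstein (m j - 1) r (x j) *
         (\<Sum>k\<in>K0. real (m j) * (a (k(j := Suc r)) - a (k(j := r))) * (\<Prod>i\<in>{..<d}-{j}. Bernstein (m i) (k i) (x i))))"
    unfolding Qp_split[OF assms] Dop_def fst_conv snd_conv K0' by (auto intro!: sum.cong prod.cong)
  also have "\<dots> = (\<Sum>r\<le>m j - 1. real (m j) * (R (Suc r) - R r) * Bernstein (m j - 1) r (x j))"
    unfolding R_def by (auto intro!: sum.cong simp: sum_distrib_left sum_subtractf algebra_simps)
  finally show ?thesis using d eq by (simp add: add.commute)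
qed


lemma pdiff_eqI: "((\<lambda>t. g (x(i := x i + t))) has_real_derivative D) (at 0) \<Longrightarrow> pdiff i g x = D"
  unfolding pdiff_def by (rule the_equality) (auto intro: DERIV_unique)

fun Ds :: "nat list \<Rightarrow> (nat \<Rightarrow> nat) \<times> ((nat \<Rightarrow> nat) \<Rightarrow> real) \<Rightarrow> (nat \<Rightarrow> nat) \<times> ((nat \<Rightarrow> nat) \<Rightarrow> real)" where
  "Ds [] ma = ma"
| "Ds (j # js) ma = Dop j (Ds js ma)"

lemma nabla_Qp:
  "set js \<subseteq> {..<d} \<Longrightarrow> nabla js (Qp d m a) = (\<lambda>x. Qp d (fst (Ds js (m, a))) (snd (Ds js (m, a))) x)"
proof (induct js)
  case Nil then show ?case by simp
next
  case (Cons j js)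
  have "pdiff j (\<lambda>x. Qp d (fst (Ds js (m, a))) (snd (Ds js (m, a))) x) x
     = Qp d (fst (Ds (j # js) (m, a))) (snd (Ds (j # js) (m, a))) x" for x
    using Qp_deriv[of j d "fst (Ds js (m, a))" "snd (Ds js (m, a))" x] Cons.prems
    by (intro pdiff_eqI) simp
  moreover have IH: "nabla js (Qp d m a) = (\<lambda>x. Qp d (fst (Ds js (m, a))) (snd (Ds js (m, a))) x)"
    using Cons by simp
  ultimately show ?case unfolding nabla.simps IH by (simp add: fun_eq_iff)
qed

lemma Dop_comm: "Dop i (Dop j ma) = Dop j (Dop i ma)"
proof (cases "i = j")
  case True then show ?thesis by simp
next
  case False
  obtain m a where ma: "ma = (m, a)" by fastforce
  have "k(i := Suc (k i), j := Suc (k j)) = k(j := Suc (k j), i := Suc (k i))" for k :: "nat \<Rightarrow> nat"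
    using False by (rule fun_upd_twist)
  then show ?thesis using False unfolding ma Dop_def
    by (auto simp: fun_upd_twist algebra_simps fun_eq_iff)
qed

lemma Ds_append: "Ds (xs @ ys) ma = Ds xs (Ds ys ma)"
  by (induct xs) auto

lemma Dop_Ds_comm: "Dop j (Ds xs ma) = Ds xs (Dop j ma)"
  by (induct xs) (auto simp: Dop_comm)

lemma Ds_rev: "Ds (rev js) ma = Ds js ma"
  by (induct js arbitrary: ma) (auto simp: Ds_append Dop_Ds_comm)

fun mdeg :: "nat list \<Rightarrow> (nat \<Rightarrow> nat) \<Rightarrow> (nat \<Rightarrow> nat)" where
  "mdeg [] m = m"
| "mdeg (j # js) m = (mdeg js m)(j := mdeg js m j - 1)"

lemma Ds_fst: "fst (Ds js (m, a)) = mdeg js m"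
  by (induct js) (auto simp: Dop_def)

lemma mdeg_val: "mdeg js m i = m i - count_list js i"
  by (induct js) auto

fun cst :: "nat list \<Rightarrow> (nat \<Rightarrow> nat) \<Rightarrow> real" where
  "cst [] m = 1"
| "cst (j # js) m = real (mdeg js m j) * cst js m"

definition node :: "nat \<Rightarrow> nat \<Rightarrow> (nat \<Rightarrow> nat) \<Rightarrow> (nat \<Rightarrow> real)" where
  "node n d k = (\<lambda>i. if i < d then real (k i + 1) / real (n + 2) else 0)"

definition fdiff :: "nat \<Rightarrow> real \<Rightarrow> ((nat \<Rightarrow> real) \<Rightarrow> real) \<Rightarrow> ((nat \<Rightarrow> real) \<Rightarrow> real)" where
  "fdiff j h F = (\<lambda>y. F (y(j := y j + h)) - F y)"

fun Phi :: "nat list \<Rightarrow> real \<Rightarrow> ((nat \<Rightarrow> real) \<Rightarrow> real) \<Rightarrow> ((nat \<Rightarrow> real) \<Rightarrow> real)" where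
  "Phi [] h F = F"
| "Phi (j # js) h F = Phi js h (fdiff j h F)"

lemma Phi_snoc: "Phi (xs @ [j]) h F = fdiff j h (Phi xs h F)"
  by (induct xs arbitrary: F) auto

lemma node_step: "j < d \<Longrightarrow> node n d (k(j := Suc (k j))) = (node n d k)(j := node n d k j + 1 / real (n + 2))"
  unfolding node_def by (auto simp: fun_eq_iff add_divide_distrib)

lemma Ds_coef:
  "set xs \<subseteq> {..<d} \<Longrightarrow>
   snd (Ds xs (m, \<lambda>k. F (node n d k))) k = cst xs m * Phi (rev xs) (1 / real (n + 2)) F (node n d k)"
proof (induct xs arbitrary: k)
  case Nil then show ?case by simp
next
  case (Cons j xs)
  have j: "j < d" using Cons.prems by simp
  have "snd (Ds (j # xs) (m, \<lambda>k. F (node n d k))) k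
    = real (mdeg xs m j) * (snd (Ds xs (m, \<lambda>k. F (node n d k))) (k(j := Suc (k j))) - snd (Ds xs (m, \<lambda>k. F (node n d k))) k)"
    by (simp add: Dop_def Ds_fst)
  also have "\<dots> = real (mdeg xs m j) * cst xs m * fdiff j (1 / real (n + 2)) (Phi (rev xs) (1 / real (n + 2)) F) (node n d k)"
    using Cons by (simp add: node_step[OF j] fdiff_def algebra_simps)
  finally show ?case by (simp add: Phi_snoc)
qed


definition lineopen :: "nat \<Rightarrow> (nat \<Rightarrow> real) set \<Rightarrow> bool" where
  "lineopen d U \<longleftrightarrow> (\<forall>z\<in>U. \<forall>i<d. \<exists>e>0. \<forall>t. \<bar>t\<bar> < e \<longrightarrow> z(i := z i + t) \<in> U)"

definition DiffU :: "nat \<Rightarrow> (nat \<Rightarrow> real) set \<Rightarrow> nat \<Rightarrow> ((nat \<Rightarrow> real) \<Rightarrow> real) \<Rightarrow> bool" where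
  "DiffU d U r F \<longleftrightarrow> (\<forall>is. length is < r \<longrightarrow> set is \<subseteq> {..<d} \<longrightarrow>
     (\<forall>z\<in>U. \<forall>i<d. ((\<lambda>t. nabla is F (z(i := z i + t))) has_real_derivative nabla (i # is) F z) (at 0)))"

lemma DiffU_mono:
  assumes "DiffU d U r F" "U' \<subseteq> U" "r' \<le> r" shows "DiffU d U' r' F"
  unfolding DiffU_def
proof (intro allI impI ballI)
  fix "is" z i assume a: "length is < r'" "set is \<subseteq> {..<d}" "z \<in> U'" "i < d"
  have "length is < r" "z \<in> U" using a assms(2,3) by auto
  then show "((\<lambda>t. nabla is F (z(i := z i + t))) has_real_derivative nabla (i # is) F z) (at 0)"
    using assms(1) a(2,4) unfolding DiffU_def by blast
qed

lemma DiffU_D: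
  "DiffU d U r F \<Longrightarrow> length is < r \<Longrightarrow> set is \<subseteq> {..<d} \<Longrightarrow> z \<in> U \<Longrightarrow> i < d \<Longrightarrow>
   ((\<lambda>t. nabla is F (z(i := z i + t))) has_real_derivative nabla (i # is) F z) (at 0)"
  unfolding DiffU_def by blast

lemma pdiff_local:
  assumes "lineopen d U" "z \<in> U" "i < d" "\<And>w. w \<in> U \<Longrightarrow> ga w = gb w"
    "((\<lambda>t. gb (z(i := z i + t))) has_real_derivative D) (at 0)"
  shows "((\<lambda>t. ga (z(i := z i + t))) has_real_derivative D) (at 0)"
proof -
  obtain e where e: "e > 0" "\<And>t. \<bar>t\<bar> < e \<Longrightarrow> z(i := z i + t) \<in> U"
    using assms(1-3) unfolding lineopen_def by blast
  have "eventually (\<lambda>t. ga (z(i := z i + t)) = gb (z(i := z i + t))) (nhds 0)"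
    unfolding eventually_nhds_metric using e assms(4) by (intro exI[of _ e]) (auto simp: dist_real_def)
  then show ?thesis using assms(5) DERIV_cong_ev[of 0 0 "\<lambda>t. ga (z(i := z i + t))" "\<lambda>t. gb (z(i := z i + t))" D D]
    by simp
qed

lemma Lin:
  assumes "lineopen d U" "DiffU d U r F1" "DiffU d U r F2"
  shows "length is \<le> r \<Longrightarrow> set is \<subseteq> {..<d} \<Longrightarrow> z \<in> U \<Longrightarrow>
    nabla is (\<lambda>w. F1 w - F2 w) z = nabla is F1 z - nabla is F2 z"
proof (induct "is" arbitrary: z)
  case Nil then show ?case by simp
next
  case (Cons i "is")
  have IH: "\<And>w. w \<in> U \<Longrightarrow> nabla is (\<lambda>w. F1 w - F2 w) w = nabla is F1 w - nabla is F2 w"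
    using Cons by simp
  have "((\<lambda>t. nabla is F1 (z(i := z i + t)) - nabla is F2 (z(i := z i + t))) has_real_derivative
      nabla (i # is) F1 z - nabla (i # is) F2 z) (at 0)"
    using Cons.prems by (intro DERIV_diff DiffU_D[OF assms(2)] DiffU_D[OF assms(3)]) auto
  note dd = this
  have "((\<lambda>t. nabla is (\<lambda>w. F1 w - F2 w) (z(i := z i + t))) has_real_derivative
      nabla (i # is) F1 z - nabla (i # is) F2 z) (at 0)"
    using Cons.prems by (intro pdiff_local[OF assms(1) _ _ IH dd]) auto
  then show ?case by (simp add: pdiff_eqI)
qed

lemma Lin_Diff:
  assumes "lineopen d U" "DiffU d U r F1" "DiffU d U r F2"
  shows "DiffU d U r (\<lambda>w. F1 w - F2 w)"
  unfolding DiffU_def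
proof (intro allI impI ballI)
  fix "is" z i assume a: "length is < r" "set is \<subseteq> {..<d}" "z \<in> U" "i < d"
  have "((\<lambda>t. nabla is F1 (z(i := z i + t)) - nabla is F2 (z(i := z i + t))) has_real_derivative
      nabla (i # is) F1 z - nabla (i # is) F2 z) (at 0)"
    using a by (intro DERIV_diff DiffU_D[OF assms(2)] DiffU_D[OF assms(3)]) auto
  note dd = this
  have IH: "\<And>w. w \<in> U \<Longrightarrow> nabla is (\<lambda>w. F1 w - F2 w) w = nabla is F1 w - nabla is F2 w"
    using a by (intro Lin[OF assms]) auto
  have "((\<lambda>t. nabla is (\<lambda>w. F1 w - F2 w) (z(i := z i + t))) has_real_derivative
      nabla (i # is) F1 z - nabla (i # is) F2 z) (at 0)"
    using a by (intro pdiff_local[OF assms(1) _ _ IH dd]) auto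
  moreover have "nabla (i # is) (\<lambda>w. F1 w - F2 w) z = nabla (i # is) F1 z - nabla (i # is) F2 z"
    using a by (intro Lin[OF assms]) auto
  ultimately show "((\<lambda>t. nabla is (\<lambda>w. F1 w - F2 w) (z(i := z i + t))) has_real_derivative
      nabla (i # is) (\<lambda>w. F1 w - F2 w) z) (at 0)" by simp
qed

lemma upd_shift_comm:
  fixes x :: "nat \<Rightarrow> real"
  shows "(x(i := x i + t))(j := (x(i := x i + t)) j + h) = (x(j := x j + h))(i := (x(j := x j + h)) i + t)"
proof (cases "i = j")
  case True
  have e: "x j + t + h = x j + h + t" by simp
  have "(x(i := x i + t))(j := (x(i := x i + t)) j + h) = x(j := x j + t + h)" using True by simp
  also have "\<dots> = x(j := x j + h + t)" using e by (rule arg_cong[where f="\<lambda>v. x(j := v)"])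
  also have "\<dots> = (x(j := x j + h))(i := (x(j := x j + h)) i + t)" using True by simp
  finally show ?thesis .
next
  case False then show ?thesis by (simp add: fun_upd_twist)
qed

lemma nabla_shift: "nabla is (\<lambda>w. F (w(j := w j + h))) = (\<lambda>w. nabla is F (w(j := w j + h)))"
proof (induct "is")
  case Nil then show ?case by simp
next
  case (Cons i "is")
  show ?case unfolding nabla.simps Cons pdiff_def upd_shift_comm ..
qed

lemma DiffU_shift:
  assumes "DiffU d U r F" "\<And>w. w \<in> U' \<Longrightarrow> w(j := w j + h) \<in> U"
  shows "DiffU d U' r (\<lambda>w. F (w(j := w j + h)))"
  unfolding DiffU_def nabla_shift
proof (intro allI impI ballI)
  fix "is" z i assume a: "length is < r" "set is \<subseteq> {..<d}" "z \<in> U'" "i < d"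
  have "((\<lambda>t. nabla is F ((z(j := z j + h))(i := (z(j := z j + h)) i + t))) has_real_derivative nabla (i # is) F (z(j := z j + h))) (at 0)"
    using assms(1) a(1,2,4) assms(2)[OF a(3)] unfolding DiffU_def by blast
  then show "((\<lambda>t. nabla is F ((z(i := z i + t))(j := (z(i := z i + t)) j + h))) has_real_derivative nabla (i # is) F (z(j := z j + h))) (at 0)"
    unfolding upd_shift_comm .
qed

lemma fdiff_props:
  fixes j :: nat and h :: real
  assumes "lineopen d U" "DiffU d U r F"
  defines "U' \<equiv> {z \<in> U. z(j := z j + h) \<in> U}"
  shows "lineopen d U'" "DiffU d U' r (fdiff j h F)"
    "\<And>is z. length is \<le> r \<Longrightarrow> set is \<subseteq> {..<d} \<Longrightarrow> z \<in> U' \<Longrightarrow>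
       nabla is (fdiff j h F) z = nabla is F (z(j := z j + h)) - nabla is F z"
proof -
  show lo: "lineopen d U'" unfolding lineopen_def
  proof (intro ballI allI impI)
    fix z i assume a: "z \<in> U'" "i < d"
    obtain e1 where e1: "e1 > 0" "\<And>t. \<bar>t\<bar> < e1 \<Longrightarrow> z(i := z i + t) \<in> U"
      using assms(1) a unfolding lineopen_def U'_def by blast
    obtain e2 where e2: "e2 > 0" "\<And>t. \<bar>t\<bar> < e2 \<Longrightarrow> (z(j := z j + h))(i := (z(j := z j + h)) i + t) \<in> U"
      using assms(1) a unfolding lineopen_def U'_def by blast
    show "\<exists>e>0. \<forall>t. \<bar>t\<bar> < e \<longrightarrow> z(i := z i + t) \<in> U'"
    proof (intro exI[of _ "min e1 e2"] conjI allI impI)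
      show "min e1 e2 > 0" using e1 e2 by simp
      fix t assume t: "\<bar>t\<bar> < min e1 e2"
      have A: "z(i := z i + t) \<in> U" using e1 t by simp
      have t2: "\<bar>t\<bar> < e2" using t by simp
      have B: "(z(i := z i + t))(j := (z(i := z i + t)) j + h) \<in> U"
        by (subst upd_shift_comm) (rule e2(2)[OF t2])
      show "z(i := z i + t) \<in> U'" unfolding U'_def using A B by blast
    qed
  qed
  have d1: "DiffU d U' r F" using assms(2) by (rule DiffU_mono) (auto simp: U'_def)
  have d2: "DiffU d U' r (\<lambda>w. F (w(j := w j + h)))" using assms(2) by (rule DiffU_shift) (auto simp: U'_def)
  have fe: "fdiff j h F = (\<lambda>w. F (w(j := w j + h)) - F w)" unfolding fdiff_def ..
  show "DiffU d U' r (fdiff j h F)" unfolding fe by (rule Lin_Diff[OF lo d2 d1])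
  show "\<And>is z. length is \<le> r \<Longrightarrow> set is \<subseteq> {..<d} \<Longrightarrow> z \<in> U' \<Longrightarrow>
       nabla is (fdiff j h F) z = nabla is F (z(j := z j + h)) - nabla is F z"
    unfolding fe using Lin[OF lo d2 d1] by (simp add: nabla_shift)
qed

definition bx :: "real \<Rightarrow> (nat \<Rightarrow> real) \<Rightarrow> nat list \<Rightarrow> (nat \<Rightarrow> real) set" where
  "bx h y js = {z. \<forall>i. y i \<le> z i \<and> z i \<le> y i + h * real (count_list js i)}"

lemma mvt_Phi:
  "lineopen d U \<Longrightarrow> DiffU d U (length js) F \<Longrightarrow> set js \<subseteq> {..<d} \<Longrightarrow> h > 0 \<Longrightarrow> bx h y js \<subseteq> U \<Longrightarrow>
   \<exists>\<xi>\<in>bx h y js. Phi js h F y = h ^ length js * nabla js F \<xi>"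
proof (induct js arbitrary: F U)
  case Nil
  have "y \<in> bx h y []" unfolding bx_def by simp
  then show ?case by auto
next
  case (Cons j js)
  define U' where "U' = {z \<in> U. z(j := z j + h) \<in> U}"
  have j: "j < d" using Cons.prems by simp
  have D: "DiffU d U (length js) F" using Cons.prems(2) by (rule DiffU_mono) auto
  note fp = fdiff_props[OF Cons.prems(1) D, where j=j and h=h, folded U'_def]
  have sub: "bx h y js \<subseteq> U'"
  proof
    fix z assume z: "z \<in> bx h y js"
    have "z \<in> bx h y (j # js)" using z Cons.prems(4) unfolding bx_def
      by (auto intro: order_trans simp: algebra_simps)
    moreover have "z(j := z j + h) \<in> bx h y (j # js)" unfolding bx_def
    proof (intro CollectI allI)
      fix i
      have zi: "y i \<le> z i" "z i \<le> y i + h * real (count_list js i)" using z unfolding bx_def by auto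
      show "y i \<le> (z(j := z j + h)) i \<and> (z(j := z j + h)) i \<le> y i + h * real (count_list (j # js) i)"
        using zi Cons.prems(4) by (cases "i = j") (auto simp: algebra_simps)
    qed
    ultimately show "z \<in> U'" using Cons.prems(5) unfolding U'_def by auto
  qed
  obtain \<xi> where xi: "\<xi> \<in> bx h y js" "Phi js h (fdiff j h F) y = h ^ length js * nabla js (fdiff j h F) \<xi>"
    using Cons.hyps[OF fp(1) fp(2)] Cons.prems sub by auto
  have nd: "nabla js (fdiff j h F) \<xi> = nabla js F (\<xi>(j := \<xi> j + h)) - nabla js F \<xi>"
    using fp(3)[of js \<xi>] xi sub Cons.prems by auto
  have inbx: "\<xi>(j := t) \<in> bx h y (j # js)" if "\<xi> j \<le> t" "t \<le> \<xi> j + h" for t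
    using xi(1) that unfolding bx_def
    by (auto simp: algebra_simps intro: order_trans)
  have der: "DERIV (\<lambda>t. nabla js F (\<xi>(j := t))) t :> nabla (j # js) F (\<xi>(j := t))"
    if "\<xi> j \<le> t" "t \<le> \<xi> j + h" for t
  proof -
    have "((\<lambda>s. nabla js F ((\<xi>(j := t))(j := (\<xi>(j := t)) j + s))) has_real_derivative nabla (j # js) F (\<xi>(j := t))) (at 0)"
      using DiffU_D[OF Cons.prems(2), of js "\<xi>(j := t)" j] Cons.prems(3) inbx[OF that] Cons.prems(5) j by auto
    then have "((\<lambda>s. nabla js F (\<xi>(j := s + t))) has_real_derivative nabla (j # js) F (\<xi>(j := t))) (at 0)"
      by (simp add: add.commute)
    then show ?thesis using DERIV_shift[of "\<lambda>t. nabla js F (\<xi>(j := t))" _ 0 t] by simp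
  qed
  obtain z where z: "\<xi> j < z" "z < \<xi> j + h"
    "nabla js F (\<xi>(j := \<xi> j + h)) - nabla js F (\<xi>(j := \<xi> j)) = (\<xi> j + h - \<xi> j) * nabla (j # js) F (\<xi>(j := z))"
    using MVT2[of "\<xi> j" "\<xi> j + h" "\<lambda>t. nabla js F (\<xi>(j := t))" "\<lambda>t. nabla (j # js) F (\<xi>(j := t))"] der Cons.prems(4)
    by auto
  have "\<xi>(j := z) \<in> bx h y (j # js)" using inbx z by auto
  moreover have "Phi (j # js) h F y = h ^ length (j # js) * nabla (j # js) F (\<xi>(j := z))"
    using xi nd z by simp
  ultimately show ?case by blast
qed


lemma lineopen_cube: "lineopen d (open_cube d)"
  unfolding lineopen_def
proof (intro ballI allI impI)
  fix z i assume z: "z \<in> open_cube d" and i: "i < d"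
  have zi: "0 < z i" "z i < 1" using z i unfolding open_cube_def by auto
  show "\<exists>e>0. \<forall>t. \<bar>t\<bar> < e \<longrightarrow> z(i := z i + t) \<in> open_cube d"
  proof (intro exI[of _ "min (z i) (1 - z i)"] conjI allI impI)
    show "min (z i) (1 - z i) > 0" using zi by simp
    fix t assume t: "\<bar>t\<bar> < min (z i) (1 - z i)"
    show "z(i := z i + t) \<in> open_cube d" using z t i unfolding open_cube_def by auto
  qed
qed

lemma cube_coord: "x \<in> open_cube d \<Longrightarrow> i < d \<Longrightarrow> 0 < x i \<and> x i < 1"
  unfolding open_cube_def by auto

lemma cube_out: "x \<in> open_cube d \<Longrightarrow> d \<le> i \<Longrightarrow> x i = 0"
  unfolding open_cube_def by auto

lemma edist_ge_coord: "l < d \<Longrightarrow> \<bar>x l - y l\<bar> \<le> edist d x y"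
proof -
  assume l: "l < d"
  have "(x l - y l)^2 \<le> (\<Sum>i<d. (x i - y i)^2)"
    using l by (intro member_le_sum) auto
  then have "sqrt ((x l - y l)^2) \<le> edist d x y" unfolding edist_def by (rule real_sqrt_le_mono)
  then show ?thesis by simp
qed

lemma edist_le_sum: "edist d x y \<le> (\<Sum>i<d. \<bar>x i - y i\<bar>)"
proof -
  have "edist d x y = L2_set (\<lambda>i. x i - y i) {..<d}" unfolding edist_def L2_set_def ..
  then show ?thesis using L2_set_le_sum_abs by metis
qed

lemma edist_nonneg: "edist d x y \<ge> 0"
  unfolding edist_def by (simp add: sum_nonneg)

lemma edist_pos: "x \<in> open_cube d \<Longrightarrow> y \<in> open_cube d \<Longrightarrow> x \<noteq> y \<Longrightarrow> edist d x y > 0"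
proof -
  assume a: "x \<in> open_cube d" "y \<in> open_cube d" "x \<noteq> y"
  then obtain l where l: "x l \<noteq> y l" by auto
  have "l < d" using a l cube_out[of x d l] cube_out[of y d l] by (cases "l < d") auto
  then have "\<bar>x l - y l\<bar> \<le> edist d x y" by (rule edist_ge_coord)
  then show ?thesis using l by simp
qed

lemma mvt_bound:
  fixes \<phi> :: "real \<Rightarrow> real"
  assumes "\<And>t. min a b \<le> t \<Longrightarrow> t \<le> max a b \<Longrightarrow> DERIV \<phi> t :> \<phi>' t"
    "\<And>t. min a b \<le> t \<Longrightarrow> t \<le> max a b \<Longrightarrow> \<bar>\<phi>' t\<bar> \<le> S"
  shows "\<bar>\<phi> b - \<phi> a\<bar> \<le> S * \<bar>b - a\<bar>"
proof -
  consider "a < b" | "a = b" | "b < a" by linarith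
  then show ?thesis
  proof cases
    case 1
    obtain z where z: "a < z" "z < b" "\<phi> b - \<phi> a = (b - a) * \<phi>' z"
      using MVT2[OF 1, of \<phi> \<phi>'] assms 1 by auto
    have "\<bar>\<phi>' z\<bar> \<le> S" using assms(2)[of z] z 1 by auto
    then show ?thesis using z 1 by (simp add: abs_mult mult.commute mult_left_mono)
  next
    case 2 then show ?thesis by simp
  next
    case 3
    obtain z where z: "b < z" "z < a" "\<phi> a - \<phi> b = (a - b) * \<phi>' z"
      using MVT2[OF 3, of \<phi> \<phi>'] assms 3 by auto
    have "\<bar>\<phi>' z\<bar> \<le> S" using assms(2)[of z] z 3 by auto
    then show ?thesis using z 3 by (simp add: abs_mult mult.commute mult_left_mono abs_minus_commute)
  qed
qed

lemma lip_path:
  assumes der: "\<And>z i. z \<in> open_cube d \<Longrightarrow> i < d \<Longrightarrow> ((\<lambda>t. G (z(i := z i + t))) has_real_derivative G' i z) (at 0)"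
    and bnd: "\<And>z i. z \<in> open_cube d \<Longrightarrow> i < d \<Longrightarrow> \<bar>G' i z\<bar> \<le> S"
    and x: "x \<in> open_cube d" and y: "y \<in> open_cube d"
  shows "\<bar>G x - G y\<bar> \<le> real d * S * edist d x y"
proof (cases "d = 0")
  case True
  then have "x = y" using x y unfolding open_cube_def by auto
  then show ?thesis using True by simp
next
  case False
  have S0: "S \<ge> 0" using bnd[OF x, of 0] False by auto
  define zz where "zz l = (\<lambda>i. if i < l then y i else x i)" for l
  have zzc: "zz l \<in> open_cube d" for l
    using x y unfolding zz_def open_cube_def by auto
  have z0: "zz 0 = x" unfolding zz_def by auto
  have zd: "zz d = y" unfolding zz_def using x y cube_out[OF x] cube_out[OF y] by (auto simp: fun_eq_iff)
  have step: "\<bar>G (zz (Suc l)) - G (zz l)\<bar> \<le> S * \<bar>y l - x l\<bar>" if l: "l < d" for l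
  proof -
    have zs: "zz (Suc l) = (zz l)(l := y l)" unfolding zz_def by (auto simp: fun_eq_iff)
    have zl: "zz l = (zz l)(l := x l)" unfolding zz_def by (auto simp: fun_eq_iff)
    have inc: "(zz l)(l := t) \<in> open_cube d" if "min (x l) (y l) \<le> t" "t \<le> max (x l) (y l)" for t
    proof -
      have "0 < t" "t < 1" using that cube_coord[OF x l] cube_coord[OF y l] by auto
      then show ?thesis using zzc[of l] l unfolding open_cube_def by auto
    qed
    have "\<bar>G ((zz l)(l := y l)) - G ((zz l)(l := x l))\<bar> \<le> S * \<bar>y l - x l\<bar>"
    proof (rule mvt_bound[where \<phi>="\<lambda>t. G ((zz l)(l := t))" and \<phi>'="\<lambda>t. G' l ((zz l)(l := t))"])
      fix t assume t: "min (x l) (y l) \<le> t" "t \<le> max (x l) (y l)"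
      have "((\<lambda>s. G (((zz l)(l := t))(l := ((zz l)(l := t)) l + s))) has_real_derivative G' l ((zz l)(l := t))) (at 0)"
        using der[OF inc[OF t] l] .
      then have "((\<lambda>s. G ((zz l)(l := s + t))) has_real_derivative G' l ((zz l)(l := t))) (at 0)"
        by (simp add: add.commute)
      then show "DERIV (\<lambda>t. G ((zz l)(l := t))) t :> G' l ((zz l)(l := t))"
        using DERIV_shift[of "\<lambda>t. G ((zz l)(l := t))" _ 0 t] by simp
      show "\<bar>G' l ((zz l)(l := t))\<bar> \<le> S" using bnd[OF inc[OF t] l] .
    qed
    then show ?thesis using zs zl by metis
  qed
  have "G y - G x = (\<Sum>l<d. G (zz (Suc l)) - G (zz l))"
    using sum_lessThan_telescope[of "\<lambda>l. G (zz l)" d] z0 zd by simp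
  then have "\<bar>G x - G y\<bar> \<le> (\<Sum>l<d. \<bar>G (zz (Suc l)) - G (zz l)\<bar>)"
    by (metis abs_minus_commute sum_abs)
  also have "\<dots> \<le> (\<Sum>l<d. S * edist d x y)"
  proof (rule sum_mono)
    fix l assume "l \<in> {..<d}"
    then have l: "l < d" by simp
    have "\<bar>y l - x l\<bar> \<le> edist d x y" using edist_ge_coord[OF l, of x y] by (simp add: abs_minus_commute)
    then show "\<bar>G (zz (Suc l)) - G (zz l)\<bar> \<le> S * edist d x y"
      using step[OF l] S0 by (meson mult_left_mono order_trans)
  qed
  finally show ?thesis by simp
qed


lemma ucont_bounded:
  assumes u: "ucont_on d (open_cube d) g"
  shows "\<exists>M. \<forall>x\<in>open_cube d. \<bar>g x\<bar> \<le> M"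
proof -
  obtain \<delta> where \<delta>: "\<delta> > 0" "\<And>x y. x \<in> open_cube d \<Longrightarrow> y \<in> open_cube d \<Longrightarrow> edist d x y < \<delta> \<Longrightarrow> \<bar>g x - g y\<bar> < 1"
    using u unfolding ucont_on_def by (meson zero_less_one)
  define c0 where "c0 = (\<lambda>i. if i < d then 1/2 else (0::real))"
  have c0c: "c0 \<in> open_cube d" unfolding c0_def open_cube_def by auto
  define N :: nat where "N = Suc (nat \<lceil>real d / \<delta>^2\<rceil>)"
  have "N \<ge> 1" unfolding N_def by simp
  then have N1: "real N \<ge> 1" by simp
  have Nb: "real d / \<delta>^2 < real N"
  proof -
    have "real d / \<delta>^2 \<le> real (nat \<lceil>real d / \<delta>^2\<rceil>)" by (rule real_nat_ceiling_ge)
    moreover have "real N = real (nat \<lceil>real d / \<delta>^2\<rceil>) + 1" unfolding N_def by simp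
    ultimately show ?thesis by linarith
  qed
  have "\<bar>g x\<bar> \<le> \<bar>g c0\<bar> + real N" if x: "x \<in> open_cube d" for x
  proof -
    define pp where "pp j = (\<lambda>i. c0 i + (real j / real N) * (x i - c0 i))" for j
    have ppc: "pp j \<in> open_cube d" if "j \<le> N" for j
    proof -
      have s: "0 \<le> real j / real N" "real j / real N \<le> 1" using that N1 by (auto simp: field_simps)
      have "0 < pp j i \<and> pp j i < 1" if i: "i < d" for i
      proof -
        have e: "pp j i = (1 - real j / real N) * c0 i + (real j / real N) * x i"
        proof -
          define s where "s = real j / real N"
          have "pp j i = c0 i + s * (x i - c0 i)" unfolding pp_def s_def ..
          also have "\<dots> = (1 - s) * c0 i + s * x i" by (simp add: algebra_simps)
          finally show ?thesis unfolding s_def .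
        qed
        have "c0 i = 1/2" using i unfolding c0_def by simp
        moreover have "0 < x i" "x i < 1" using cube_coord[OF x i] by auto
        ultimately show ?thesis unfolding e
        proof -
          assume c: "c0 i = 1/2" and xi: "0 < x i" "x i < 1"
          define s where "s = real j / real N"
          have s01: "0 \<le> s" "s \<le> 1" using s unfolding s_def by auto
          consider "s = 0" | "s > 0" using s01 by linarith
          then have "0 < (1 - s) * (1/2) + s * x i \<and> (1 - s) * (1/2) + s * x i < 1"
          proof cases
            case 1 then show ?thesis using xi by simp
          next
            case 2
            have "0 < s * x i" "s * x i < s" using 2 xi by (auto intro: mult_pos_pos mult_strict_left_mono[of _ 1, simplified])
            moreover have "(1 - s) * (1/2) = 1/2 - s/2" by (simp add: left_diff_distrib)
            ultimately show ?thesis using s01 by linarith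
          qed
          then show "0 < (1 - real j / real N) * c0 i + real j / real N * x i \<and>
            (1 - real j / real N) * c0 i + real j / real N * x i < 1" unfolding c s_def .
        qed
      qed
      moreover have "pp j i = 0" if "i \<ge> d" for i
        using that cube_out[OF x that] unfolding pp_def c0_def by simp
      ultimately show ?thesis unfolding open_cube_def by auto
    qed
    have dist: "edist d (pp (Suc j)) (pp j) < \<delta>" for j
    proof -
      have "(\<Sum>i<d. (pp (Suc j) i - pp j i)^2) \<le> (\<Sum>i<d. 1 / real N ^ 2)"
      proof (rule sum_mono)
        fix i assume "i \<in> {..<d}"
        then have i: "i < d" by simp
        have e1: "pp (Suc j) i - pp j i = (real (Suc j) / real N - real j / real N) * (x i - c0 i)"
          unfolding pp_def by (simp only: left_diff_distrib)
        have e2: "real (Suc j) / real N - real j / real N = 1 / real N"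
          by (simp add: diff_divide_distrib[symmetric])
        have "pp (Suc j) i - pp j i = (x i - c0 i) / real N" unfolding e1 e2 by simp
        moreover have "\<bar>x i - c0 i\<bar> \<le> 1" using cube_coord[OF x i] i unfolding c0_def by (simp add: abs_le_iff)
        then have "\<bar>x i - c0 i\<bar>^2 \<le> 1^2" by (intro power_mono) auto
        then have "(x i - c0 i)^2 \<le> 1" by simp
        then have "(x i - c0 i)^2 / real N ^ 2 \<le> 1 / real N ^ 2" by (intro divide_right_mono) auto
        ultimately show "(pp (Suc j) i - pp j i)^2 \<le> 1 / real N ^ 2"
          by (simp add: power_divide)
      qed
      also have "\<dots> = real d / real N ^ 2" by simp
      also have "\<dots> \<le> real d / real N" using N1 by (simp add: divide_left_mono power2_eq_square)
      also have "\<dots> < \<delta>^2" using Nb \<delta>(1) N1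
        by (metis divide_less_eq mult.commute pos_divide_less_eq zero_less_power less_le_trans zero_less_one)
      finally have "sqrt (\<Sum>i<d. (pp (Suc j) i - pp j i)^2) < sqrt (\<delta>^2)" by (rule real_sqrt_less_mono)
      then show ?thesis unfolding edist_def using \<delta>(1) by simp
    qed
    have "\<bar>g (pp j) - g c0\<bar> \<le> real j" if "j \<le> N" for j
      using that
    proof (induct j)
      case 0
      have "pp 0 = c0" unfolding pp_def by auto
      then show ?case by simp
    next
      case (Suc j)
      have "\<bar>g (pp (Suc j)) - g (pp j)\<bar> < 1" using \<delta>(2)[OF ppc[OF Suc.prems] ppc dist[of j]] Suc.prems by simp
      then show ?case using Suc by simp
    qed
    moreover have "pp N = x" unfolding pp_def using N1 by (auto simp: fun_eq_iff)
    ultimately show ?thesis by fastforce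
  qed
  then show ?thesis by blast
qed

lemma bern_le1: "0 \<le> t \<Longrightarrow> t \<le> 1 \<Longrightarrow> r \<le> m \<Longrightarrow> Bernstein m r t \<le> 1"
proof -
  assume a: "0 \<le> t" "t \<le> 1" "r \<le> m"
  have "Bernstein m r t \<le> (\<Sum>k\<le>m. Bernstein m k t)"
    using a by (intro member_le_sum) (auto intro: Bernstein_nonneg)
  then show ?thesis by simp
qed

definition QB :: "nat \<Rightarrow> (nat \<Rightarrow> nat) \<Rightarrow> ((nat \<Rightarrow> nat) \<Rightarrow> real) \<Rightarrow> real" where
  "QB d m a = (\<Sum>k\<in>Kset d (\<lambda>i. {..m i}). \<bar>a k\<bar>)"

lemma weight_01:
  assumes "x \<in> open_cube d" "k \<in> Kset d (\<lambda>i. {..m i})"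
  shows "0 \<le> (\<Prod>i<d. Bernstein (m i) (k i) (x i))" "(\<Prod>i<d. Bernstein (m i) (k i) (x i)) \<le> 1"
proof -
  have c: "0 \<le> x i" "x i \<le> 1" "k i \<le> m i" if "i < d" for i
    using assms that cube_coord[OF assms(1) that] unfolding Kset_def by auto
  show "0 \<le> (\<Prod>i<d. Bernstein (m i) (k i) (x i))" using c by (intro prod_nonneg Bernstein_nonneg) auto
  show "(\<Prod>i<d. Bernstein (m i) (k i) (x i)) \<le> 1" using c by (intro prod_le_1) (auto intro: Bernstein_nonneg bern_le1)
qed

lemma Qp_bound: "x \<in> open_cube d \<Longrightarrow> \<bar>Qp d m a x\<bar> \<le> QB d m a"
proof -
  assume x: "x \<in> open_cube d"
  have "\<bar>Qp d m a x\<bar> \<le> (\<Sum>k\<in>Kset d (\<lambda>i. {..m i}). \<bar>a k * (\<Prod>i<d. Bernstein (m i) (k i) (x i))\<bar>)"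
    unfolding Qp_def by (rule sum_abs)
  also have "\<dots> \<le> QB d m a" unfolding QB_def
  proof (rule sum_mono)
    fix k assume k: "k \<in> Kset d (\<lambda>i. {..m i})"
    show "\<bar>a k * (\<Prod>i<d. Bernstein (m i) (k i) (x i))\<bar> \<le> \<bar>a k\<bar>"
      using weight_01[OF x k] by (simp add: abs_mult mult_left_le)
  qed
  finally show ?thesis .
qed

definition QS :: "nat \<Rightarrow> (nat \<Rightarrow> nat) \<Rightarrow> ((nat \<Rightarrow> nat) \<Rightarrow> real) \<Rightarrow> real" where
  "QS d m a = (\<Sum>i<d. QB d (fst (Dop i (m, a))) (snd (Dop i (m, a))))"

lemma QB_nonneg: "QB d m a \<ge> 0"
  unfolding QB_def by (simp add: sum_nonneg)

lemma Qp_lip: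
  assumes "x \<in> open_cube d" "y \<in> open_cube d"
  shows "\<bar>Qp d m a x - Qp d m a y\<bar> \<le> real d * QS d m a * edist d x y"
proof (rule lip_path[where G'="\<lambda>i z. Qp d (fst (Dop i (m, a))) (snd (Dop i (m, a))) z"])
  show "((\<lambda>t. Qp d m a (z(i := z i + t))) has_real_derivative Qp d (fst (Dop i (m, a))) (snd (Dop i (m, a))) z) (at 0)"
    if "i < d" for z i using Qp_deriv[OF that] .
  show "\<bar>Qp d (fst (Dop i (m, a))) (snd (Dop i (m, a))) z\<bar> \<le> QS d m a" if "z \<in> open_cube d" "i < d" for z i
  proof -
    have "\<bar>Qp d (fst (Dop i (m, a))) (snd (Dop i (m, a))) z\<bar> \<le> QB d (fst (Dop i (m, a))) (snd (Dop i (m, a)))"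
      using Qp_bound[OF that(1)] .
    also have "\<dots> \<le> QS d m a" unfolding QS_def using that(2)
      by (intro member_le_sum) (auto simp: QB_nonneg)
    finally show ?thesis .
  qed
qed (use assms in auto)

lemma bern_var: "0 < M \<Longrightarrow> (\<Sum>k\<le>M. (x - real k / real M)^2 * Bernstein M k x) = x * (1 - x) / real M"
proof -
  assume n: "0 < M"
  have *: "\<And>a b x::real. (a - b)\<^sup>2 * x = a * (a - 1) * x + (1 - 2 * b) * a * x + b * b * x"
    by (simp add: algebra_simps power2_eq_square)
  have "(\<Sum>k\<le>M. (real k - real M * x)\<^sup>2 * Bernstein M k x) = real M * x * (1 - x)"
    apply (simp add: * sum.distrib)
    apply (simp flip: sum_distrib_left add: mult.assoc)
    apply (simp add: algebra_simps power2_eq_square)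
    done
  then have "(\<Sum>k\<le>M. (real k - real M * x)\<^sup>2 * Bernstein M k x) / real M ^ 2 = x * (1 - x) / real M"
    by (simp add: power2_eq_square)
  then show ?thesis
    using n by (simp add: sum_divide_distrib field_split_simps power2_commute)
qed

lemma bern_cheb:
  assumes "0 \<le> t" "t \<le> 1" "0 < M" "0 < \<eta>"
  shows "(\<Sum>r\<in>{r. r \<le> M \<and> \<eta> \<le> \<bar>real r / real M - t\<bar>}. Bernstein M r t) \<le> 1 / (real M * \<eta>^2)"
proof -
  have "(\<Sum>r\<in>{r. r \<le> M \<and> \<eta> \<le> \<bar>real r / real M - t\<bar>}. Bernstein M r t)
     \<le> (\<Sum>r\<in>{r. r \<le> M \<and> \<eta> \<le> \<bar>real r / real M - t\<bar>}. (t - real r / real M)^2 / \<eta>^2 * Bernstein M r t)"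
  proof (rule sum_mono)
    fix r assume "r \<in> {r. r \<le> M \<and> \<eta> \<le> \<bar>real r / real M - t\<bar>}"
    then have r: "\<eta> \<le> \<bar>real r / real M - t\<bar>" by simp
    have "\<eta>^2 \<le> (t - real r / real M)^2" using r assms(4)
      by (metis abs_le_square_iff abs_minus_commute abs_of_pos less_imp_le order_trans abs_ge_self)
    then have "1 \<le> (t - real r / real M)^2 / \<eta>^2" using assms(4) by simp
    then show "Bernstein M r t \<le> (t - real r / real M)^2 / \<eta>^2 * Bernstein M r t"
      using Bernstein_nonneg[OF assms(1,2)] by (metis mult_le_cancel_right1 mult.commute less_le_not_le order.refl mult_right_mono)
  qed
  also have "\<dots> \<le> (\<Sum>r\<le>M. (t - real r / real M)^2 / \<eta>^2 * Bernstein M r t)"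
    by (rule sum_mono2) (auto intro!: divide_nonneg_nonneg mult_nonneg_nonneg Bernstein_nonneg assms)
  also have "\<dots> = (t * (1 - t) / real M) / \<eta>^2"
    using bern_var[OF assms(3), of t] by (simp add: sum_divide_distrib[symmetric] field_simps)
  also have "\<dots> \<le> 1 / (real M * \<eta>^2)"
  proof -
    have "t * (1 - t) \<le> 1" using assms(1,2) by (smt (verit) mult_left_le)
    then have "t * (1 - t) / real M / \<eta>^2 \<le> 1 / real M / \<eta>^2"
      using assms by (intro divide_right_mono) auto
    then show ?thesis by simp
  qed
  finally show ?thesis .
qed


lemma avg_est:
  fixes W :: "'k \<Rightarrow> real"
  assumes A: "finite A" and W0: "\<And>k. k \<in> A \<Longrightarrow> W k \<ge> 0" and W1: "(\<Sum>k\<in>A. W k) = 1"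
    and Mb: "\<And>k. k \<in> A \<Longrightarrow> \<bar>v k\<bar> \<le> M" "\<bar>g0\<bar> \<le> M"
    and near: "\<And>k. k \<in> A \<Longrightarrow> \<not> P k \<Longrightarrow> \<bar>v k - g0\<bar> \<le> e1" and e1: "e1 \<ge> 0"
  shows "\<bar>(\<Sum>k\<in>A. C * v k * W k) - g0\<bar> \<le> \<bar>C - 1\<bar> * M + e1 + 2 * M * sum W {k\<in>A. P k}"
proof -
  have "(\<Sum>k\<in>A. C * v k * W k) - g0 = (\<Sum>k\<in>A. ((C - 1) * v k + (v k - g0)) * W k)"
  proof -
    have g: "(\<Sum>k\<in>A. g0 * W k) = g0" using W1 by (simp add: sum_distrib_left[symmetric])
    show ?thesis using g by (simp add: algebra_simps sum_subtractf sum_distrib_left sum.distrib flip: sum_distrib_right)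
  qed
  also have "\<bar>\<dots>\<bar> \<le> (\<Sum>k\<in>A. (\<bar>C - 1\<bar> * M * W k + \<bar>v k - g0\<bar> * W k))"
  proof -
    have "\<bar>(\<Sum>k\<in>A. ((C - 1) * v k + (v k - g0)) * W k)\<bar> \<le> (\<Sum>k\<in>A. \<bar>((C - 1) * v k + (v k - g0)) * W k\<bar>)"
      by (rule sum_abs)
    also have "\<dots> \<le> (\<Sum>k\<in>A. (\<bar>C - 1\<bar> * M * W k + \<bar>v k - g0\<bar> * W k))"
    proof (rule sum_mono)
      fix k assume k: "k \<in> A"
      have "\<bar>((C - 1) * v k + (v k - g0)) * W k\<bar> = \<bar>(C - 1) * v k + (v k - g0)\<bar> * W k"
        using W0[OF k] by (simp add: abs_mult)
      also have "\<dots> \<le> (\<bar>C - 1\<bar> * M + \<bar>v k - g0\<bar>) * W k"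
      proof (rule mult_right_mono[OF _ W0[OF k]])
        have "\<bar>(C - 1) * v k\<bar> \<le> \<bar>C - 1\<bar> * M" using Mb(1)[OF k] by (simp add: abs_mult mult_left_mono)
        then show "\<bar>(C - 1) * v k + (v k - g0)\<bar> \<le> \<bar>C - 1\<bar> * M + \<bar>v k - g0\<bar>" by linarith
      qed
      finally show "\<bar>((C - 1) * v k + (v k - g0)) * W k\<bar> \<le> \<bar>C - 1\<bar> * M * W k + \<bar>v k - g0\<bar> * W k"
        by (simp add: algebra_simps)
    qed
    finally show ?thesis .
  qed
  also have "\<dots> = \<bar>C - 1\<bar> * M + (\<Sum>k\<in>A. \<bar>v k - g0\<bar> * W k)"
    using W1 by (simp add: sum.distrib flip: sum_distrib_left)
  also have "(\<Sum>k\<in>A. \<bar>v k - g0\<bar> * W k) \<le> (\<Sum>k\<in>A. e1 * W k + (if P k then 2 * M * W k else 0))"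
  proof (rule sum_mono)
    fix k assume k: "k \<in> A"
    show "\<bar>v k - g0\<bar> * W k \<le> e1 * W k + (if P k then 2 * M * W k else 0)"
    proof (cases "P k")
      case True
      have "\<bar>v k - g0\<bar> \<le> 2 * M" using Mb(1)[OF k] Mb(2) by linarith
      then have "\<bar>v k - g0\<bar> * W k \<le> 2 * M * W k" using W0[OF k] by (rule mult_right_mono)
      moreover have "e1 * W k \<ge> 0"
      proof -
        show ?thesis using e1 W0[OF k] by simp
      qed
      ultimately show ?thesis using True by simp
    next
      case False
      then show ?thesis using near[OF k] W0[OF k] by (simp add: mult_right_mono)
    qed
  qed
  also have "\<dots> = e1 + 2 * M * sum W {k\<in>A. P k}"
    using W1 A by (simp add: sum.distrib sum.inter_filter[symmetric] sum_distrib_left[symmetric]) 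
  finally show ?thesis by simp
qed

lemma fw1:
  fixes W :: "'k \<Rightarrow> real" and d :: nat
  assumes A: "finite A" and W0: "\<And>k. k \<in> A \<Longrightarrow> W k \<ge> 0"
    and PQ: "\<And>k. k \<in> A \<Longrightarrow> P k \<Longrightarrow> \<exists>i<d. Q i k"
  shows "sum W {k\<in>A. P k} \<le> (\<Sum>i<d. sum W {k\<in>A. Q i k})"
proof -
  have "sum W {k\<in>A. P k} = (\<Sum>k\<in>A. if P k then W k else 0)" using A by (simp add: sum.inter_filter)
  also have "\<dots> \<le> (\<Sum>k\<in>A. \<Sum>i<d. if Q i k then W k else 0)"
  proof (rule sum_mono)
    fix k assume k: "k \<in> A"
    show "(if P k then W k else 0) \<le> (\<Sum>i<d. if Q i k then W k else 0)"
    proof (cases "P k")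
      case True
      then obtain i where i: "i < d" "Q i k" using PQ[OF k] by blast
      have "(if Q i k then W k else 0) \<le> (\<Sum>i<d. if Q i k then W k else 0)"
        using i W0[OF k] by (intro member_le_sum) auto
      then show ?thesis using True i by simp
    next
      case False then show ?thesis using W0[OF k] by (simp add: sum_nonneg)
    qed
  qed
  also have "\<dots> = (\<Sum>i<d. \<Sum>k\<in>A. if Q i k then W k else 0)" by (rule sum.swap)
  also have "\<dots> = (\<Sum>i<d. sum W {k\<in>A. Q i k})" using A by (simp add: sum.inter_filter)
  finally show ?thesis .
qed

lemma fw2:
  assumes x: "x \<in> open_cube d" and i: "i < d" and m: "m i > 0" and \<eta>: "\<eta> > 0"
  shows "sum (\<lambda>k. \<Prod>l<d. Bernstein (m l) (k l) (x l)) {k\<in>Kset d (\<lambda>l. {..m l}). \<eta> \<le> \<bar>real (k i) / real (m i) - x i\<bar>}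
     \<le> 1 / (real (m i) * \<eta>^2)"
proof -
  define S where "S = (\<lambda>l. {..m l})(i := {r. r \<le> m i \<and> \<eta> \<le> \<bar>real r / real (m i) - x i\<bar>})"
  have eq: "{k\<in>Kset d (\<lambda>l. {..m l}). \<eta> \<le> \<bar>real (k i) / real (m i) - x i\<bar>} = Kset d S"
    using i unfolding S_def Kset_def by auto
  have "sum (\<lambda>k. \<Prod>l<d. Bernstein (m l) (k l) (x l)) (Kset d S) = (\<Prod>l<d. \<Sum>r\<in>S l. Bernstein (m l) r (x l))"
    by (rule sum_prod_Kset)
  also have "\<dots> = (\<Sum>r\<in>S i. Bernstein (m i) r (x i)) * (\<Prod>l\<in>{..<d}-{i}. \<Sum>r\<in>S l. Bernstein (m l) r (x l))"
    using i by (subst prod.remove[of _ i]) auto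
  also have "(\<Prod>l\<in>{..<d}-{i}. \<Sum>r\<in>S l. Bernstein (m l) r (x l)) = 1"
    unfolding S_def by (intro prod.neutral) auto
  also have "(\<Sum>r\<in>S i. Bernstein (m i) r (x i)) \<le> 1 / (real (m i) * \<eta>^2)"
    unfolding S_def using cube_coord[OF x i] m \<eta> by (simp add: bern_cheb)
  finally show ?thesis unfolding eq by simp
qed

lemma node_close:
  fixes k c n :: nat
  assumes "c \<le> 3" "4 \<le> n" "k \<le> n - c"
  shows "\<bar>real (k + 1) / real (n + 2) - real k / real (n - c)\<bar> \<le> 4 / real (n + 2)"
proof -
  define M where "M = real n - real c"
  have Mr: "real (n - c) = M" unfolding M_def using assms by simp
  have M1: "M \<ge> 1" unfolding M_def using assms by simp
  have K: "0 \<le> real k" "real k \<le> M" using assms Mr by auto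
  have e: "real (k + 1) / real (n + 2) - real k / M = (M - real k * (real c + 2)) / ((real n + 2) * M)"
    using M1 unfolding M_def by (simp add: field_simps)
  have "\<bar>M - real k * (real c + 2)\<bar> \<le> 4 * M"
  proof -
    have "real k * (real c + 2) \<le> M * 5" using K assms by (intro mult_mono) auto
    moreover have "real k * (real c + 2) \<ge> 0" by simp
    ultimately show ?thesis using M1 by linarith
  qed
  then have "\<bar>M - real k * (real c + 2)\<bar> / ((real n + 2) * M) \<le> 4 * M / ((real n + 2) * M)"
    using M1 by (intro divide_right_mono) auto
  also have "\<dots> = 4 / real (n + 2)" using M1 by simp
  finally show ?thesis unfolding Mr e using M1 by (simp add: abs_div)
qed

lemma cst_bounds:
  "length xs \<le> n \<Longrightarrow> real (n - length xs) ^ length xs \<le> cst xs (\<lambda>_. n) \<and> cst xs (\<lambda>_. n) \<le> real n ^ length xs"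
proof (induct xs)
  case Nil then show ?case by simp
next
  case (Cons j xs)
  have IH: "real (n - length xs) ^ length xs \<le> cst xs (\<lambda>_. n)" "cst xs (\<lambda>_. n) \<le> real n ^ length xs"
    using Cons by auto
  have cnt: "count_list xs j \<le> length xs" by (induct xs) auto
  have md: "real (n - length xs) \<le> real (mdeg xs (\<lambda>_. n) j)" "real (mdeg xs (\<lambda>_. n) j) \<le> real n"
    unfolding mdeg_val using cnt by auto
  have "real (n - length (j # xs)) ^ length (j # xs) = real (n - Suc (length xs)) * real (n - Suc (length xs)) ^ length xs"
    by simp
  also have "\<dots> \<le> real (mdeg xs (\<lambda>_. n) j) * cst xs (\<lambda>_. n)"
  proof (rule mult_mono)
    show "real (n - Suc (length xs)) \<le> real (mdeg xs (\<lambda>_. n) j)" using md by linarith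
    have "real (n - Suc (length xs)) ^ length xs \<le> real (n - length xs) ^ length xs"
      by (intro power_mono) auto
    then show "real (n - Suc (length xs)) ^ length xs \<le> cst xs (\<lambda>_. n)" using IH by linarith
  qed auto
  finally have lo: "real (n - length (j # xs)) ^ length (j # xs) \<le> cst (j # xs) (\<lambda>_. n)" by simp
  have c0: "0 \<le> cst xs (\<lambda>_. n)" using IH(1) by (meson order_trans zero_le_power of_nat_0_le_iff)
  have "cst (j # xs) (\<lambda>_. n) \<le> real n * real n ^ length xs"
    using md IH c0 by (simp, intro mult_mono) auto
  then show ?case using lo by simp
qed

lemma C_bound:
  assumes "length xs \<le> 3" "4 \<le> n"
  shows "\<bar>cst xs (\<lambda>_. n) * (1 / real (n + 2)) ^ length xs - 1\<bar> \<le> 15 / real (n + 2)"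
proof -
  let ?L = "length xs"
  have cb: "real (n - ?L) ^ ?L \<le> cst xs (\<lambda>_. n)" "cst xs (\<lambda>_. n) \<le> real n ^ ?L"
    using cst_bounds[of xs n] assms by auto
  have n2: "real (n + 2) > 0" by simp
  define C where "C = cst xs (\<lambda>_. n) * (1 / real (n + 2)) ^ ?L"
  have up: "C \<le> 1"
  proof -
    have "C \<le> real n ^ ?L * (1 / real (n + 2)) ^ ?L" unfolding C_def using cb by (intro mult_right_mono) auto
    also have "\<dots> = (real n / real (n + 2)) ^ ?L" by (simp add: power_divide)
    also have "\<dots> \<le> 1" by (intro power_le_one) auto
    finally show ?thesis .
  qed
  define b where "b = (real n - 3) / real (n + 2)"
  have b01: "0 \<le> b" "b \<le> 1" unfolding b_def using assms by auto
  have lo: "b ^ 3 \<le> C"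
  proof -
    have "b ^ 3 \<le> b ^ ?L" using b01 assms by (intro power_decreasing) auto
    also have "\<dots> \<le> (real (n - ?L) / real (n + 2)) ^ ?L"
      unfolding b_def using assms by (intro power_mono divide_right_mono) auto
    also have "\<dots> = real (n - ?L) ^ ?L * (1 / real (n + 2)) ^ ?L" by (simp add: power_divide)
    also have "\<dots> \<le> C" unfolding C_def using cb by (intro mult_right_mono) auto
    finally show ?thesis .
  qed
  have beq: "b = 1 + (- 5 / real (n + 2))" unfolding b_def by (simp add: field_simps)
  have m1: "-1 \<le> - 5 / real (n + 2)" using assms by (simp add: field_simps)
  have B: "1 + real 3 * (- 5 / real (n + 2)) \<le> (1 + (- 5 / real (n + 2))) ^ 3"
    using Bernoulli_inequality[OF m1, of 3] .
  have "real 3 * (- 5 / real (n + 2)) = - (15 / real (n + 2))" by simp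
  then have "1 - 15 / real (n + 2) \<le> b ^ 3" using B unfolding beq by linarith
  then have "1 - 15 / real (n + 2) \<le> C" using lo by simp
  then show ?thesis using up unfolding C_def by simp
qed


lemma div_le_from: "0 < y \<Longrightarrow> 0 < e \<Longrightarrow> c / e \<le> y \<Longrightarrow> c / y \<le> (e::real)"
  by (simp add: pos_divide_le_eq mult.commute)

lemma main_est:
  fixes F :: "(nat \<Rightarrow> real) \<Rightarrow> real" and js :: "nat list" and d :: nat
  assumes d1: "d \<ge> 1" and DF: "DiffU d (open_cube d) 3 F"
    and uc: "ucont_on d (open_cube d) (nabla js F)"
    and js: "set js \<subseteq> {..<d}" "length js \<le> 3" and \<epsilon>: "\<epsilon> > 0"
  shows "\<exists>N. \<forall>n\<ge>N. \<forall>x\<in>open_cube d. \<bar>nabla js (Qp d (\<lambda>_. n) (\<lambda>k. F (node n d k))) x - nabla js F x\<bar> \<le> \<epsilon>"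
proof -
  define g where "g = nabla js F"
  obtain M0 where M0: "\<forall>x\<in>open_cube d. \<bar>g x\<bar> \<le> M0" using ucont_bounded[OF uc] unfolding g_def by blast
  define M where "M = \<bar>M0\<bar> + 1"
  have Mpos: "M > 0" unfolding M_def by simp
  have Mb: "\<And>x. x \<in> open_cube d \<Longrightarrow> \<bar>g x\<bar> \<le> M" using M0 unfolding M_def by force
  have e3: "\<epsilon>/3 > 0" using \<epsilon> by simp
  have "\<forall>e>0. \<exists>\<delta>>0. \<forall>x\<in>open_cube d. \<forall>y\<in>open_cube d. edist d x y < \<delta> \<longrightarrow> \<bar>g x - g y\<bar> < e"
    using uc unfolding ucont_on_def g_def .
  then obtain \<delta> where \<delta>0: "\<delta> > 0" and \<delta>1: "\<forall>x\<in>open_cube d. \<forall>y\<in>open_cube d. edist d x y < \<delta> \<longrightarrow> \<bar>g x - g y\<bar> < \<epsilon>/3"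
    using e3 by blast
  have \<delta>: "\<delta> > 0" "\<And>x y. x \<in> open_cube d \<Longrightarrow> y \<in> open_cube d \<Longrightarrow> edist d x y < \<delta> \<Longrightarrow> \<bar>g x - g y\<bar> < \<epsilon>/3"
    using \<delta>0 \<delta>1 by auto
  define \<eta> where "\<eta> = \<delta> / (2 * real d)"
  have \<eta>pos: "\<eta> > 0" unfolding \<eta>_def using \<delta> d1 by simp
  define K where "K = (15 * M) / (\<epsilon>/3) + 9 / \<eta> + (2 * M * real d / \<eta>^2) / (\<epsilon>/3) + 1"
  have k0: "0 \<le> (15 * M) / (\<epsilon>/3)" "0 \<le> 9 / \<eta>" "0 \<le> (2 * M * real d / \<eta>^2) / (\<epsilon>/3)"
    using Mpos \<eta>pos e3 by auto
  have Kt: "(15 * M) / (\<epsilon>/3) \<le> K" "9 / \<eta> \<le> K" "(2 * M * real d / \<eta>^2) / (\<epsilon>/3) \<le> K" "0 < K"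
    unfolding K_def using k0 by linarith+
  define N where "N = nat \<lceil>K\<rceil> + 4"
  show ?thesis
  proof (intro exI[of _ N] allI impI ballI)
    fix n x assume n: "N \<le> n" and x: "x \<in> open_cube d"
    have n4: "4 \<le> n" using n unfolding N_def by simp
    have nK: "K \<le> real n - 3"
    proof -
      have "K \<le> real (nat \<lceil>K\<rceil>)" by (rule real_nat_ceiling_ge)
      moreover have "real (nat \<lceil>K\<rceil>) + 4 \<le> real n" using n unfolding N_def by linarith
      ultimately show ?thesis by linarith
    qed
    define m where "m = (\<lambda>_::nat. n)"
    define h where "h = 1 / real (n + 2)"
    have hpos: "h > 0" unfolding h_def by simp
    define m' where "m' = mdeg js m"
    define A where "A = Kset d (\<lambda>i. {..m' i})"
    define W where "W k = (\<Prod>i<d. Bernstein (m' i) (k i) (x i))" for k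
    define C where "C = cst (rev js) m * h ^ length js"
    have cnt3: "count_list js i \<le> 3" for i
    proof -
      have "count_list js i \<le> length js" by (induct js) auto
      then show ?thesis using js(2) by simp
    qed
    have cnt0: "count_list js i = 0" if "d \<le> i" for i
    proof -
      have "i \<notin> set js" using js(1) that by auto
      then show ?thesis by (simp add: count_list_0_iff)
    qed
    have m'v: "m' i = n - count_list js i" for i unfolding m'_def m_def mdeg_val ..
    have m'ge: "real n - 3 \<le> real (m' i)" for i using cnt3[of i] n4 unfolding m'v by simp
    have m'pos: "m' i > 0" for i using cnt3[of i] n4 unfolding m'v by simp
    have finA: "finite A" unfolding A_def by (rule finite_Kset) auto
    have W0: "W k \<ge> 0" if "k \<in> A" for k using weight_01[OF x, of k m'] that unfolding A_def W_def by auto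
    have W1: "(\<Sum>k\<in>A. W k) = 1"
      unfolding A_def W_def using sum_prod_Kset[where g="\<lambda>i r. Bernstein (m' i) r (x i)" and d=d and S="\<lambda>i. {..m' i}"]
      by simp
    have rep: "nabla js (Qp d m (\<lambda>k. F (node n d k))) x = (\<Sum>k\<in>A. cst (rev js) m * Phi js h F (node n d k) * W k)"
    proof -
      have e0: "nabla js (Qp d m (\<lambda>k. F (node n d k))) x
        = Qp d (fst (Ds js (m, \<lambda>k. F (node n d k)))) (snd (Ds js (m, \<lambda>k. F (node n d k)))) x"
        unfolding nabla_Qp[OF js(1)] ..
      have f1: "fst (Ds js (m, \<lambda>k. F (node n d k))) = m'" unfolding Ds_fst m'_def ..
      have "set (rev js) \<subseteq> {..<d}" using js(1) by simp
      from Ds_coef[OF this, of m F n]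
      have f2: "snd (Ds js (m, \<lambda>k. F (node n d k))) = (\<lambda>k. cst (rev js) m * Phi js h F (node n d k))"
        unfolding Ds_rev h_def by (simp add: fun_eq_iff)
      show ?thesis unfolding e0 f1 f2 Qp_def A_def W_def by (simp add: mult.assoc)
    qed
    have bxsub: "bx h (node n d k) js \<subseteq> open_cube d" if k: "k \<in> A" for k
    proof
      fix z assume z: "z \<in> bx h (node n d k) js"
      have "0 < z i \<and> z i < 1" if i: "i < d" for i
      proof -
        have ki: "k i \<le> m' i" using k i unfolding A_def Kset_def by auto
        have z0: "node n d k i \<le> z i \<and> z i \<le> node n d k i + h * real (count_list js i)"
          using z unfolding bx_def by blast
        have nk: "node n d k i = real (k i + 1) / real (n + 2)" using i unfolding node_def by simp
        have z1: "real (k i + 1) / real (n + 2) \<le> z i" "z i \<le> real (k i + 1) / real (n + 2) + h * real (count_list js i)"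
          using z0 unfolding nk by auto
        have "real (k i + 1) / real (n + 2) + h * real (count_list js i) = real (k i + 1 + count_list js i) / real (n + 2)"
          unfolding h_def by (simp add: add_divide_distrib)
        also have "\<dots> < 1"
        proof -
          have "k i + 1 + count_list js i < n + 2" using ki cnt3[of i] n4 unfolding m'v by linarith
          then show ?thesis by simp
        qed
        finally show ?thesis using z1 by (auto intro: less_le_trans[rotated])
      qed
      moreover have "z i = 0" if i: "d \<le> i" for i
      proof -
        have z0: "node n d k i \<le> z i \<and> z i \<le> node n d k i + h * real (count_list js i)"
          using z unfolding bx_def by blast
        have "node n d k i = 0" using i unfolding node_def by simp
        then show ?thesis using z0 cnt0[OF i] by simp
      qed
      ultimately show "z \<in> open_cube d" unfolding open_cube_def by auto
    qed
    have "\<forall>k\<in>A. \<exists>\<xi>. \<xi> \<in> bx h (node n d k) js \<and> Phi js h F (node n d k) = h ^ length js * g \<xi>"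
    proof
      fix k assume k: "k \<in> A"
      have "DiffU d (open_cube d) (length js) F" using DiffU_mono[OF DF subset_refl js(2)] .
      from mvt_Phi[OF lineopen_cube this js(1) hpos bxsub[OF k]]
      show "\<exists>\<xi>. \<xi> \<in> bx h (node n d k) js \<and> Phi js h F (node n d k) = h ^ length js * g \<xi>"
        unfolding g_def by blast
    qed
    then have "\<exists>\<xi>. \<forall>k\<in>A. \<xi> k \<in> bx h (node n d k) js \<and> Phi js h F (node n d k) = h ^ length js * g (\<xi> k)"
      by (rule bchoice)
    then obtain \<xi> where \<xi>': "\<forall>k\<in>A. \<xi> k \<in> bx h (node n d k) js \<and> Phi js h F (node n d k) = h ^ length js * g (\<xi> k)"
      by blast
    then have \<xi>: "\<And>k. k \<in> A \<Longrightarrow> \<xi> k \<in> bx h (node n d k) js \<and> Phi js h F (node n d k) = h ^ length js * g (\<xi> k)"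
      by blast
    have \<xi>c: "\<xi> k \<in> open_cube d" if "k \<in> A" for k using \<xi>[OF that] bxsub[OF that] by auto
    have rep2: "nabla js (Qp d m (\<lambda>k. F (node n d k))) x = (\<Sum>k\<in>A. C * g (\<xi> k) * W k)"
      unfolding rep C_def using \<xi> by (intro sum.cong) auto
    have est: "\<bar>(\<Sum>k\<in>A. C * g (\<xi> k) * W k) - g x\<bar> \<le> \<bar>C - 1\<bar> * M + \<epsilon>/3 + 2 * M * sum W {k\<in>A. \<delta> \<le> edist d (\<xi> k) x}"
    proof (rule avg_est[OF finA W0 W1])
      show "\<bar>g (\<xi> k)\<bar> \<le> M" if "k \<in> A" for k using Mb[OF \<xi>c[OF that]] .
      show "\<bar>g x\<bar> \<le> M" using Mb[OF x] .
      show "\<bar>g (\<xi> k) - g x\<bar> \<le> \<epsilon>/3" if "k \<in> A" "\<not> \<delta> \<le> edist d (\<xi> k) x" for k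
        using \<delta>(2)[OF \<xi>c[OF that(1)] x] that(2) by force
    qed (use e3 in auto)
    have PQ: "\<exists>i<d. \<eta> \<le> \<bar>real (k i) / real (m' i) - x i\<bar>" if k: "k \<in> A" and P: "\<delta> \<le> edist d (\<xi> k) x" for k
    proof (rule ccontr)
      assume "\<not> (\<exists>i<d. \<eta> \<le> \<bar>real (k i) / real (m' i) - x i\<bar>)"
      then have cl: "\<bar>real (k i) / real (m' i) - x i\<bar> < \<eta>" if "i < d" for i using that by auto
      have h9: "9 / real (n + 2) \<le> \<eta>"
        by (rule div_le_from) (use \<eta>pos Kt nK in auto)
      have "\<bar>\<xi> k i - x i\<bar> < 2 * \<eta>" if i: "i < d" for i
      proof -
        have ki: "k i \<le> n - count_list js i" using k i unfolding A_def Kset_def m'v by auto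
        have b1: "node n d k i \<le> \<xi> k i" "\<xi> k i \<le> node n d k i + h * real (count_list js i)"
          using \<xi>[OF k] unfolding bx_def by auto
        have "h * real (count_list js i) \<le> h * 3" using cnt3[of i] hpos by (intro mult_left_mono) auto
        then have b2: "\<bar>\<xi> k i - node n d k i\<bar> \<le> 3 / real (n + 2)" using b1 unfolding h_def by simp
        have b3: "\<bar>node n d k i - real (k i) / real (m' i)\<bar> \<le> 4 / real (n + 2)"
          using node_close[OF cnt3 n4 ki] i unfolding node_def m'v by simp
        have "\<bar>\<xi> k i - x i\<bar> \<le> \<bar>\<xi> k i - node n d k i\<bar> + \<bar>node n d k i - real (k i) / real (m' i)\<bar> + \<bar>real (k i) / real (m' i) - x i\<bar>"
          by linarith
        also have "\<dots> < 3 / real (n + 2) + 4 / real (n + 2) + \<eta>" using b2 b3 cl[OF i] by linarith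
        also have "3 / real (n + 2) + 4 / real (n + 2) \<le> 9 / real (n + 2)" by (simp add: divide_right_mono)
        finally show ?thesis using h9 by linarith
      qed
      then have "(\<Sum>i<d. \<bar>\<xi> k i - x i\<bar>) < (\<Sum>i<d. 2 * \<eta>)"
        using d1 by (intro sum_strict_mono) (auto simp: lessThan_empty_iff)
      also have "\<dots> = \<delta>" unfolding \<eta>_def using d1 by simp
      finally show False using edist_le_sum[of d "\<xi> k" x] P by linarith
    qed
    have far: "sum W {k\<in>A. \<delta> \<le> edist d (\<xi> k) x} \<le> real d / ((real n - 3) * \<eta>^2)"
    proof -
      have "sum W {k\<in>A. \<delta> \<le> edist d (\<xi> k) x} \<le> (\<Sum>i<d. sum W {k\<in>A. \<eta> \<le> \<bar>real (k i) / real (m' i) - x i\<bar>})"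
        by (rule fw1[OF finA W0 PQ])
      also have "\<dots> \<le> (\<Sum>i<d. 1 / ((real n - 3) * \<eta>^2))"
      proof (rule sum_mono)
        fix i assume "i \<in> {..<d}"
        then have i: "i < d" by simp
        have "sum W {k\<in>A. \<eta> \<le> \<bar>real (k i) / real (m' i) - x i\<bar>} \<le> 1 / (real (m' i) * \<eta>^2)"
          unfolding A_def W_def by (rule fw2[OF x i m'pos \<eta>pos])
        also have "\<dots> \<le> 1 / ((real n - 3) * \<eta>^2)"
          using m'ge[of i] n4 \<eta>pos by (intro divide_left_mono mult_right_mono mult_pos_pos) auto
        finally show "sum W {k\<in>A. \<eta> \<le> \<bar>real (k i) / real (m' i) - x i\<bar>} \<le> 1 / ((real n - 3) * \<eta>^2)" .
      qed
      also have "\<dots> = real d / ((real n - 3) * \<eta>^2)" by simp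
      finally show ?thesis .
    qed
    have Cb: "\<bar>C - 1\<bar> \<le> 15 / real (n + 2)"
      using C_bound[of "rev js" n] js(2) n4 unfolding C_def h_def m_def by simp
    have t1: "\<bar>C - 1\<bar> * M \<le> \<epsilon>/3"
    proof -
      have "\<bar>C - 1\<bar> * M \<le> 15 / real (n + 2) * M" using Cb Mpos by (intro mult_right_mono) auto
      also have "\<dots> = (15 * M) / real (n + 2)" by simp
      also have "\<dots> \<le> \<epsilon>/3" by (rule div_le_from) (use e3 Kt nK in auto)
      finally show ?thesis .
    qed
    have t3: "2 * M * sum W {k\<in>A. \<delta> \<le> edist d (\<xi> k) x} \<le> \<epsilon>/3"
    proof -
      have "2 * M * sum W {k\<in>A. \<delta> \<le> edist d (\<xi> k) x} \<le> 2 * M * (real d / ((real n - 3) * \<eta>^2))"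
        using far Mpos by (intro mult_left_mono) auto
      also have "\<dots> = (2 * M * real d / \<eta>^2) / (real n - 3)" by (simp add: field_simps)
      also have "\<dots> \<le> \<epsilon>/3" by (rule div_le_from) (use e3 Kt nK in auto)
      finally show ?thesis .
    qed
    show "\<bar>nabla js (Qp d (\<lambda>_. n) (\<lambda>k. F (node n d k))) x - nabla js F x\<bar> \<le> \<epsilon>"
      using rep2 est t1 t3 unfolding m_def g_def by linarith
  qed
qed


lemma DiffU_Qp: "DiffU d U r (Qp d m a)"
  unfolding DiffU_def
proof (intro allI impI ballI)
  fix "is" z i assume a: "length is < r" "set is \<subseteq> {..<d}" "z \<in> U" "i < d"
  have s: "set (i # is) \<subseteq> {..<d}" using a by simp
  show "((\<lambda>t. nabla is (Qp d m a) (z(i := z i + t))) has_real_derivative nabla (i # is) (Qp d m a) z) (at 0)"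
    unfolding nabla_Qp[OF a(2)] nabla_Qp[OF s] using Qp_deriv[OF a(4), of "fst (Ds is (m, a))" "snd (Ds is (m, a))" z]
    by simp
qed

lemma ucont_lip:
  assumes "\<And>x y. x \<in> U \<Longrightarrow> y \<in> U \<Longrightarrow> \<bar>g x - g y\<bar> \<le> L * edist d x y" "L \<ge> 0"
  shows "ucont_on d U g"
  unfolding ucont_on_def
proof (intro allI impI)
  fix e :: real assume e: "e > 0"
  show "\<exists>\<delta>>0. \<forall>x\<in>U. \<forall>y\<in>U. edist d x y < \<delta> \<longrightarrow> \<bar>g x - g y\<bar> < e"
  proof (intro exI[of _ "e / (L + 1)"] conjI ballI impI)
    show "e / (L + 1) > 0" using e assms(2) by simp
    fix x y assume xy: "x \<in> U" "y \<in> U" "edist d x y < e / (L + 1)"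
    have "\<bar>g x - g y\<bar> \<le> L * edist d x y" using assms(1) xy by auto
    also have "\<dots> \<le> (L + 1) * edist d x y" using edist_nonneg[of d x y] by (simp add: mult_right_mono)
    also have "\<dots> < (L + 1) * (e / (L + 1))" using xy(3) assms(2) by (intro mult_strict_left_mono) auto
    also have "\<dots> = e" using assms(2) by simp
    finally show "\<bar>g x - g y\<bar> < e" .
  qed
qed

lemma RS_Qp:
  assumes "d > 0"
  shows "RS d (Qp d m a)"
proof -
  have fin: "finite (Kset d (\<lambda>i. {..m i}))" by (rule finite_Kset) auto
  have b: "RS d (\<lambda>x. Bernstein (m i) (k i) (x i))" if "i < d" for i k
  proof -
    have c: "RS d (\<lambda>x. x i)" using that by (rule RS_coord)
    have "RS d (\<lambda>x. real (m i choose k i) * (x i) ^ k i * (1 + (-1) * x i) ^ (m i - k i))"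
      using assms c by (intro RS_mult RS_const RS_power RS_add) auto
    then show ?thesis unfolding Bernstein_def by simp
  qed
  have "RS d (\<lambda>x. \<Sum>k\<in>Kset d (\<lambda>i. {..m i}). a k * (\<Prod>i<d. Bernstein (m i) (k i) (x i)))"
    using fin assms b by (intro RS_sum RS_mult RS_const RS_prod) auto
  then show ?thesis unfolding Qp_def[abs_def] .
qed

lemma norm_bound:
  fixes H :: "(nat \<Rightarrow> real) \<Rightarrow> (nat \<Rightarrow> real)"
  assumes d0: "d > 0" and p0: "p > 0" and e: "e \<ge> 0"
    and DG: "\<And>c. c < p \<Longrightarrow> DiffU d (open_cube d) 3 (G c)"
    and bnd: "\<And>c js x. c < p \<Longrightarrow> set js \<subseteq> {..<d} \<Longrightarrow> length js \<le> 3 \<Longrightarrow> x \<in> open_cube d \<Longrightarrow> \<bar>nabla js (G c) x\<bar> \<le> e"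
    and HG: "\<And>c. c < p \<Longrightarrow> (\<lambda>x. H x c) = G c"
  shows "0 \<le> Ck_alpha_norm d p 2 1 H \<and> Ck_alpha_norm d p 2 1 H \<le> e + real d * e"
proof -
  define x0 where "x0 = (\<lambda>i. if i < d then 1/2 else (0::real))"
  define x1 where "x1 = (\<lambda>i. if i < d then 1/4 else (0::real))"
  have x0c: "x0 \<in> open_cube d" unfolding x0_def open_cube_def by auto
  have x1c: "x1 \<in> open_cube d" unfolding x1_def open_cube_def by auto
  have x01: "x0 \<noteq> x1" using d0 unfolding x0_def x1_def by (metis (full_types) fun_eq_iff zero_neq_numeral divide_cancel_left num.simps(4) numeral_eq_iff one_neq_zero verit_eq_simplify(8))
  define S1 where "S1 = {\<bar>nabla is (\<lambda>x. H x c) x\<bar> | c is x. c < p \<and> set is \<subseteq> {..<d} \<and> length is \<le> 2 \<and> x \<in> open_cube d}"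
  have S1b: "v \<le> e" if "v \<in> S1" for v
    using that bnd HG unfolding S1_def by fastforce
  have S1ne: "\<bar>nabla [] (\<lambda>x. H x 0) x0\<bar> \<in> S1" unfolding S1_def using p0 x0c
    by (intro CollectI exI[of _ 0] exI[of _ "[]"] exI[of _ x0]) auto
  have S1bdd: "bdd_above S1" by (rule bdd_aboveI[where M=e]) (rule S1b)
  have sup1: "Sup S1 \<le> e" using S1ne S1b by (intro cSup_least) auto
  have inf1: "0 \<le> Sup S1" using S1ne S1bdd by (intro cSup_upper2[of _ S1]) auto
  define S2 where "S2 = holder_quots d p 2 1 H"
  have S2b: "v \<le> real d * e" if vS: "v \<in> S2" for v
  proof -
    obtain c "is" x y where v: "v = \<bar>nabla is (\<lambda>x. H x c) x - nabla is (\<lambda>x. H x c) y\<bar> / (edist d x y) powr 1"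
      and c: "c < p" and isl: "set is \<subseteq> {..<d}" "length is = 2" and xy: "x \<in> open_cube d" "y \<in> open_cube d" "x \<noteq> y"
      using vS unfolding S2_def holder_quots_def by blast
    have ep: "edist d x y > 0" using edist_pos[OF xy] .
    have "\<bar>nabla is (G c) x - nabla is (G c) y\<bar> \<le> real d * e * edist d x y"
    proof (rule lip_path[where G'="\<lambda>i z. nabla (i # is) (G c) z"])
      show "((\<lambda>t. nabla is (G c) (z(i := z i + t))) has_real_derivative nabla (i # is) (G c) z) (at 0)"
        if "z \<in> open_cube d" "i < d" for z i
        using DiffU_D[OF DG[OF c], of "is" z i] isl that by simp
      show "\<bar>nabla (i # is) (G c) z\<bar> \<le> e" if "z \<in> open_cube d" "i < d" for z i
        using bnd[OF c, of "i # is" z] isl that by simp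
    qed (use xy in auto)
    then have "\<bar>nabla is (G c) x - nabla is (G c) y\<bar> / edist d x y \<le> real d * e"
      using ep by (simp add: divide_le_eq)
    then show ?thesis using v HG[OF c] ep by simp
  qed
  have S2ne: "\<bar>nabla [0,0] (\<lambda>x. H x 0) x0 - nabla [0,0] (\<lambda>x. H x 0) x1\<bar> / (edist d x0 x1) powr 1 \<in> S2"
    unfolding S2_def holder_quots_def using p0 d0 x0c x1c x01 by fastforce
  have S2bdd: "bdd_above S2" by (rule bdd_aboveI[where M="real d * e"]) (rule S2b)
  have sup2: "Sup S2 \<le> real d * e" using S2ne S2b by (intro cSup_least) auto
  have inf2: "0 \<le> Sup S2" using S2ne S2bdd by (intro cSup_upper2[of _ S2]) auto
  have "Ck_alpha_norm d p 2 1 H = Sup S1 + Sup S2" unfolding Ck_alpha_norm_def Ck_norm_def S1_def S2_def ..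
  then show ?thesis using sup1 inf1 sup2 inf2 by simp
qed

theorem proposition2:
  fixes \<alpha> :: real and d p :: nat and f :: "(nat \<Rightarrow> real) \<Rightarrow> (nat \<Rightarrow> real)"
  assumes "0 < \<alpha>" "\<alpha> \<le> 1" "d \<ge> 1" "p \<ge> 1"
    and "is_Ck_alpha d p 3 \<alpha> f"
  shows "\<exists>(arch :: nat \<Rightarrow> nat list) (Ls :: nat \<Rightarrow> layer list).
           (\<forall>n. nn_arch_ok d p (arch n) (Ls n) \<and>
                is_Ck_alpha d p 2 1 (nn_eval recu (arch n) (Ls n))) \<and>
           (\<lambda>n. Ck_alpha_norm d p 2 1 (\<lambda>x. f x - nn_eval recu (arch n) (Ls n) x)) \<longlonglongrightarrow> 0"
proof -
  have d0: "d > 0" using assms(3) by simp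
  have p0: "p > 0" using assms(4) by simp
  have Ck: "is_Ck d p 3 f" using assms(5) unfolding is_Ck_alpha_def by simp
  define F where "F c = (\<lambda>x. f x c)" for c
  define P where "P n c = Qp d (\<lambda>_. n) (\<lambda>k. F c (node n d k))" for n c
  have DF: "DiffU d (open_cube d) 3 (F c)" if c: "c < p" for c
    unfolding DiffU_def
  proof (intro allI impI ballI)
    fix "is" z i assume a: "length is < 3" "set is \<subseteq> {..<d}" "z \<in> open_cube d" "i < d"
    show "((\<lambda>t. nabla is (F c) (z(i := z i + t))) has_real_derivative nabla (i # is) (F c) z) (at 0)"
      using Ck c a unfolding is_Ck_def F_def by auto
  qed
  have UC: "ucont_on d (open_cube d) (nabla js (F c))" if "c < p" "set js \<subseteq> {..<d}" "length js \<le> 3" for c js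
    using Ck that unfolding is_Ck_def F_def by auto
  have "\<forall>n. \<exists>arch Ls. nn_arch_ok d p arch Ls \<and> (\<forall>x c. c < p \<longrightarrow> nn_eval recu arch Ls x c = P n c x)"
  proof
    fix n
    have "net d p (\<lambda>x c. P n c x)" using assms(4) RS_Qp[OF d0] unfolding P_def by (intro RS_vec) auto
    then show "\<exists>arch Ls. nn_arch_ok d p arch Ls \<and> (\<forall>x c. c < p \<longrightarrow> nn_eval recu arch Ls x c = P n c x)"
      unfolding net_def netL_def by blast
  qed
  then have "\<exists>archf. \<forall>n. \<exists>Ls. nn_arch_ok d p (archf n) Ls \<and> (\<forall>x c. c < p \<longrightarrow> nn_eval recu (archf n) Ls x c = P n c x)"
    by (rule choice)
  then obtain archf where "\<forall>n. \<exists>Ls. nn_arch_ok d p (archf n) Ls \<and> (\<forall>x c. c < p \<longrightarrow> nn_eval recu (archf n) Ls x c = P n c x)"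
    by blast
  then have "\<exists>Lsf. \<forall>n. nn_arch_ok d p (archf n) (Lsf n) \<and> (\<forall>x c. c < p \<longrightarrow> nn_eval recu (archf n) (Lsf n) x c = P n c x)"
    by (rule choice)
  then obtain Lsf where AL: "\<forall>n. nn_arch_ok d p (archf n) (Lsf n) \<and> (\<forall>x c. c < p \<longrightarrow> nn_eval recu (archf n) (Lsf n) x c = P n c x)"
    by blast
  define h where "h n = nn_eval recu (archf n) (Lsf n)" for n
  have hP: "(\<lambda>x. h n x c) = P n c" if "c < p" for n c
    using AL that unfolding h_def by (auto simp: fun_eq_iff)
  have ok2: "is_Ck_alpha d p 2 1 (h n)" for n
  proof -
    define a where "a c = (\<lambda>k. F c (node n d k))" for c
    define mm where "mm = (\<lambda>_::nat. n)"
    have nQ: "nabla is (\<lambda>x. h n x c) = Qp d (fst (Ds is (mm, a c))) (snd (Ds is (mm, a c)))"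
      if "c < p" "set is \<subseteq> {..<d}" for c "is"
      unfolding hP[OF that(1)] P_def a_def mm_def nabla_Qp[OF that(2)] by (simp add: fun_eq_iff)
    define L where "L c is = real d * QS d (fst (Ds is (mm, a c))) (snd (Ds is (mm, a c)))" for c "is"
    have L0: "L c is \<ge> 0" for c "is"
      unfolding L_def QS_def by (intro mult_nonneg_nonneg sum_nonneg QB_nonneg) auto
    have lip: "\<bar>nabla is (\<lambda>x. h n x c) x - nabla is (\<lambda>x. h n x c) y\<bar> \<le> L c is * edist d x y"
      if "c < p" "set is \<subseteq> {..<d}" "x \<in> open_cube d" "y \<in> open_cube d" for c "is" x y
      unfolding nQ[OF that(1,2)] L_def using Qp_lip[OF that(3,4)] by simp
    have ck1: "ucont_on d (open_cube d) (nabla is (\<lambda>x. h n x c))"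
      if a: "c < p" "set is \<subseteq> {..<d}" for c "is"
      using lip[OF a] L0 by (intro ucont_lip) auto
    have ck2: "((\<lambda>t. nabla is (\<lambda>x. h n x c) (x(i := x i + t))) has_real_derivative nabla (i # is) (\<lambda>x. h n x c) x) (at 0)"
      if a: "c < p" "set is \<subseteq> {..<d}" "length is < 2" "i < d" "x \<in> open_cube d" for c "is" i x
    proof -
      have l3: "length is < 3" using a by simp
      show ?thesis unfolding hP[OF a(1)] P_def
        by (rule DiffU_D[OF DiffU_Qp[of d "open_cube d" 3 "\<lambda>_. n" "\<lambda>k. F c (node n d k)"] l3 a(2) a(5) a(4)])
    qed
    have ck: "is_Ck d p 2 (h n)"
      unfolding is_Ck_def using ck1 ck2 by blast
    define L2 where "L2 = {is. set is \<subseteq> {..<d} \<and> length is = 2}"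
    have finL2: "finite L2" unfolding L2_def by (rule finite_lists_length_eq) simp
    define B where "B = (\<Sum>c<p. \<Sum>is\<in>L2. L c is)"
    have "v \<le> B" if vS: "v \<in> holder_quots d p 2 1 (h n)" for v
    proof -
      obtain c "is" x y where v: "v = \<bar>nabla is (\<lambda>x. h n x c) x - nabla is (\<lambda>x. h n x c) y\<bar> / (edist d x y) powr 1"
        and c: "c < p" and isl: "set is \<subseteq> {..<d}" "length is = 2" and xy: "x \<in> open_cube d" "y \<in> open_cube d" "x \<noteq> y"
        using vS unfolding holder_quots_def by blast
      have ep: "edist d x y > 0" using edist_pos[OF xy] .
      have "v \<le> L c is" unfolding v using lip[OF c isl(1) xy(1,2)] ep by (simp add: divide_le_eq)
      also have "L c is \<le> (\<Sum>is\<in>L2. L c is)" using isl finL2 L0 by (intro member_le_sum) (auto simp: L2_def)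
      also have "\<dots> \<le> B" unfolding B_def using c L0 by (intro member_le_sum[of c "{..<p}" "\<lambda>c. \<Sum>is\<in>L2. L c is"] sum_nonneg) auto
      finally show ?thesis .
    qed
    then have "bdd_above (holder_quots d p 2 1 (h n))" by (intro bdd_aboveI[where M=B])
    then show ?thesis using ck unfolding is_Ck_alpha_def by simp
  qed
  define T where "T = {..<p} \<times> {js. set js \<subseteq> {..<d} \<and> length js \<le> 3}"
  have finT: "finite T" unfolding T_def by (intro finite_cartesian_product finite_lists_length_le) auto
  have conv: "(\<lambda>n. Ck_alpha_norm d p 2 1 (\<lambda>x. f x - h n x)) \<longlonglongrightarrow> 0"
  proof (rule LIMSEQ_I)
    fix r :: real assume r: "0 < r"
    define e where "e = r / (2 * (real d + 1))"
    have e0: "e > 0" unfolding e_def using r by simp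
    have "\<forall>t\<in>T. eventually (\<lambda>n. \<forall>x\<in>open_cube d. \<bar>nabla (snd t) (P n (fst t)) x - nabla (snd t) (F (fst t)) x\<bar> \<le> e) sequentially"
    proof
      fix t assume t: "t \<in> T"
      then have tt: "fst t < p" "set (snd t) \<subseteq> {..<d}" "length (snd t) \<le> 3" unfolding T_def by auto
      from main_est[OF assms(3) DF[OF tt(1)] UC[OF tt] tt(2,3) e0]
      show "eventually (\<lambda>n. \<forall>x\<in>open_cube d. \<bar>nabla (snd t) (P n (fst t)) x - nabla (snd t) (F (fst t)) x\<bar> \<le> e) sequentially"
        unfolding eventually_sequentially P_def by blast
    qed
    then have "eventually (\<lambda>n. \<forall>t\<in>T. \<forall>x\<in>open_cube d. \<bar>nabla (snd t) (P n (fst t)) x - nabla (snd t) (F (fst t)) x\<bar> \<le> e) sequentially"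
      using finT by (simp add: eventually_ball_finite)
    then obtain N where N: "\<And>n t x. n \<ge> N \<Longrightarrow> t \<in> T \<Longrightarrow> x \<in> open_cube d \<Longrightarrow> \<bar>nabla (snd t) (P n (fst t)) x - nabla (snd t) (F (fst t)) x\<bar> \<le> e"
      unfolding eventually_sequentially by blast
    show "\<exists>no. \<forall>n\<ge>no. norm (Ck_alpha_norm d p 2 1 (\<lambda>x. f x - h n x) - 0) < r"
    proof (intro exI[of _ N] allI impI)
      fix n assume n: "N \<le> n"
      define G where "G c = (\<lambda>x. F c x - P n c x)" for c
      have DP: "DiffU d (open_cube d) 3 (P n c)" for c unfolding P_def by (rule DiffU_Qp)
      have DG: "DiffU d (open_cube d) 3 (G c)" if "c < p" for c
        unfolding G_def using lineopen_cube DF[OF that] DP by (rule Lin_Diff)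
      have bnd: "\<bar>nabla js (G c) x\<bar> \<le> e" if "c < p" "set js \<subseteq> {..<d}" "length js \<le> 3" "x \<in> open_cube d" for c js x
      proof -
        have "nabla js (G c) x = nabla js (F c) x - nabla js (P n c) x"
          unfolding G_def using Lin[OF lineopen_cube DF[OF that(1)] DP] that by simp
        moreover have "(c, js) \<in> T" unfolding T_def using that by simp
        ultimately show ?thesis using N[OF n, of "(c, js)" x] that(4) by (simp add: abs_minus_commute)
      qed
      have HG: "(\<lambda>x. (\<lambda>x. f x - h n x) x c) = G c" if "c < p" for c
        using hP[OF that] unfolding G_def F_def by (auto simp: fun_eq_iff dest: fun_cong)
      have "0 \<le> Ck_alpha_norm d p 2 1 (\<lambda>x. f x - h n x) \<and> Ck_alpha_norm d p 2 1 (\<lambda>x. f x - h n x) \<le> e + real d * e"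
        by (rule norm_bound[OF d0 p0 _ DG bnd HG]) (use e0 in auto)
      moreover have "e + real d * e < r"
      proof -
        have "e + real d * e = (real d + 1) * e" by (simp add: algebra_simps)
        also have "\<dots> = r / 2" unfolding e_def
        proof -
          have "real d + 1 > 0" by simp
          then show "(real d + 1) * (r / (2 * (real d + 1))) = r / 2" by (simp add: field_simps)
        qed
        finally show ?thesis using r by simp
      qed
      ultimately show "norm (Ck_alpha_norm d p 2 1 (\<lambda>x. f x - h n x) - 0) < r" by simp
    qed
  qed
  show ?thesis
    using AL ok2 conv unfolding h_def by blast
qed


end
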